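(* Let $D$ be a weak bialgebra with a weak projection $(D,B,f,g)$ onto the weak Hopf algebra $B$ with antipode $\lambda_B$, and let $\phi_D=\mu_D\circ(D\otimes f)$. Then the morphism $t_B^D=\phi_D\circ(D\otimes(\lambda_B\circ g))\circ\delta_D:D\rightarrow D$ is idempotent, and if $p_B^D:D\rightarrow D^B$, $i_B^D:D^B\rightarrow D$ is a splitting of $t_B^D$ (i.e. $t_B^D=i_B^D\circ p_B^D$, $p_B^D\circ i_B^D=id_{D^B}$), then $p_B^D$ is a coequalizer of the pair of morphisms $\phi_D,\beta_D:D\otimes B\rightarrow D$, where $\beta_D=(D\otimes(\varepsilon_D\circ\phi_D))\circ(\delta_D\otimes B)$.
   Context: $\mathcal C$ is a strict braided monoidal category with tensor product $\otimes$, unit object $K$ and braiding $c$, in which every idempotent splits. Algebras have unit $\eta$ and product $\mu$; coalgebras counit $\varepsilon$ and coproduct $\delta$; $f\wedge g=\mu\circ(f\otimes g)\circ\delta$. A weak bialgebra is an algebra and coalgebra $D$ with $\delta_D\circ\mu_D=(\mu_D\otimes\mu_D)\circ(D\otimes c_{D,D}\otimes D)\circ(\delta_D\otimes\delta_D)$; $\varepsilon_D\circ\mu_D\circ(\mu_D\otimes D)=((\varepsilon_D\circ\mu_D)\otimes(\varepsilon_D\circ\mu_D))\circ(D\otimes\delta_D\otimes D)=((\varepsilon_D\circ\mu_D)\otimes(\varepsilon_D\circ\mu_D))\circ(D\otimes(c_{D,D}^{-1}\circ\delta_D)\otimes D)$; $(\delta_D\otimes D)\circ\delta_D\circ\eta_D=(D\otimes\mu_D\otimes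 D)\circ((\delta_D\circ\eta_D)\otimes(\delta_D\circ\eta_D))=(D\otimes(\mu_D\circ c_{D,D}^{-1})\otimes D)\circ((\delta_D\circ\eta_D)\otimes(\delta_D\circ\eta_D))$. It is a weak Hopf algebra if there is $\lambda_D:D\rightarrow D$ (antipode) with $id_D\wedge\lambda_D=\Pi_D^L$, $\lambda_D\wedge id_D=\Pi_D^R$, $\lambda_D\wedge id_D\wedge\lambda_D=\lambda_D$, where $\Pi_D^L=((\varepsilon_D\circ\mu_D)\otimes D)\circ(D\otimes c_{D,D})\circ((\delta_D\circ\eta_D)\otimes D)$ and $\Pi_D^R=(D\otimes(\varepsilon_D\circ\mu_D))\circ(c_{D,D}\otimes D)\circ(D\otimes(\delta_D\circ\eta_D))$. A morphism of weak bialgebras is a morphism that is both an algebra and a coalgebra morphism. Weak projection: $D$ a weak bialgebra, $B$ a weak Hopf algebra, $f:B\rightarrow D$ a morphism of weak bialgebras and $g:D\rightarrow B$ a coalgebra morphism with $g\circ f=id_B$ and $g\circ\mu_D\circ(D\otimes f)=\mu_B\circ(g\otimes B)$; this is denoted $(D,B,f,g)$. *)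

theory Defs
  imports Main
begin

record ('o,'m) bmcat =
  cObj  :: "'o set"
  cArr  :: "'m set"
  cDom  :: "'m \<Rightarrow> 'o"
  cCod  :: "'m \<Rightarrow> 'o"
  cId   :: "'o \<Rightarrow> 'm"
  cComp :: "'m \<Rightarrow> 'm \<Rightarrow> 'm"    (* cComp C g f = g \<circ> f *)
  cTo   :: "'o \<Rightarrow> 'o \<Rightarrow> 'o"
  cTm   :: "'m \<Rightarrow> 'm \<Rightarrow> 'm"
  cUnit :: "'o"
  cBr   :: "'o \<Rightarrow> 'o \<Rightarrow> 'm"    (* braiding c_{A,B} : A \<otimes> B \<rightarrow> B \<otimes> A *)

definition hom :: "('o,'m) bmcat \<Rightarrow> 'o \<Rightarrow> 'o \<Rightarrow> 'm set" where
  "hom C A B = {f \<in> cArr C. cDom C f = A \<and> cCod C f = B}"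

definition braided_strict_monoidal :: "('o,'m) bmcat \<Rightarrow> bool" where
  "braided_strict_monoidal C \<longleftrightarrow>
    \<comment> \<open>category\<close>
    (\<forall>f \<in> cArr C. cDom C f \<in> cObj C \<and> cCod C f \<in> cObj C) \<and>
    (\<forall>A \<in> cObj C. cId C A \<in> hom C A A) \<and>
    (\<forall>A \<in> cObj C. \<forall>B \<in> cObj C. \<forall>E \<in> cObj C. \<forall>f \<in> hom C A B. \<forall>g \<in> hom C B E.
        cComp C g f \<in> hom C A E) \<and>
    (\<forall>A \<in> cObj C. \<forall>B \<in> cObj C. \<forall>f \<in> hom C A B.
        cComp C f (cId C A) = f \<and> cComp C (cId C B) f = f) \<and>
    (\<forall>A \<in> cObj C. \<forall>B \<in> cObj C. \<forall>E \<in> cObj C. \<forall>F \<in> cObj C.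
      \<forall>f \<in> hom C A B. \<forall>g \<in> hom C B E. \<forall>h \<in> hom C E F.
        cComp C h (cComp C g f) = cComp C (cComp C h g) f) \<and>
    \<comment> \<open>tensor is a bifunctor\<close>
    (\<forall>A \<in> cObj C. \<forall>B \<in> cObj C. cTo C A B \<in> cObj C) \<and>
    (\<forall>A \<in> cObj C. \<forall>B \<in> cObj C. \<forall>A' \<in> cObj C. \<forall>B' \<in> cObj C.
      \<forall>f \<in> hom C A B. \<forall>g \<in> hom C A' B'. cTm C f g \<in> hom C (cTo C A A') (cTo C B B')) \<and>
    (\<forall>A \<in> cObj C. \<forall>B \<in> cObj C. cTm C (cId C A) (cId C B) = cId C (cTo C A B)) \<and>
    (\<forall>A \<in> cObj C. \<forall>B \<in> cObj C. \<forall>E \<in> cObj C. \<forall>A' \<in> cObj C. \<forall>B' \<in> cObj C. \<forall>E' \<in> cObj C.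
      \<forall>f \<in> hom C A B. \<forall>g \<in> hom C B E. \<forall>f' \<in> hom C A' B'. \<forall>g' \<in> hom C B' E'.
        cTm C (cComp C g f) (cComp C g' f') = cComp C (cTm C g g') (cTm C f f')) \<and>
    \<comment> \<open>strictness\<close>
    cUnit C \<in> cObj C \<and>
    (\<forall>A \<in> cObj C. \<forall>B \<in> cObj C. \<forall>E \<in> cObj C. cTo C (cTo C A B) E = cTo C A (cTo C B E)) \<and>
    (\<forall>A \<in> cObj C. cTo C (cUnit C) A = A \<and> cTo C A (cUnit C) = A) \<and>
    (\<forall>f \<in> cArr C. \<forall>g \<in> cArr C. \<forall>h \<in> cArr C. cTm C (cTm C f g) h = cTm C f (cTm C g h)) \<and>
    (\<forall>f \<in> cArr C. cTm C (cId C (cUnit C)) f = f \<and> cTm C f (cId C (cUnit C)) = f) \<and>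
    \<comment> \<open>braiding: natural isomorphism satisfying the (strict) hexagon identities\<close>
    (\<forall>A \<in> cObj C. \<forall>B \<in> cObj C. cBr C A B \<in> hom C (cTo C A B) (cTo C B A) \<and>
       (\<exists>h \<in> hom C (cTo C B A) (cTo C A B).
          cComp C h (cBr C A B) = cId C (cTo C A B) \<and> cComp C (cBr C A B) h = cId C (cTo C B A))) \<and>
    (\<forall>A \<in> cObj C. \<forall>B \<in> cObj C. \<forall>A' \<in> cObj C. \<forall>B' \<in> cObj C.
      \<forall>f \<in> hom C A B. \<forall>g \<in> hom C A' B'.
        cComp C (cBr C B B') (cTm C f g) = cComp C (cTm C g f) (cBr C A A')) \<and>
    (\<forall>A \<in> cObj C. \<forall>B \<in> cObj C. \<forall>E \<in> cObj C.
        cBr C A (cTo C B E) = cComp C (cTm C (cId C B) (cBr C A E)) (cTm C (cBr C A B) (cId C E)) \<and>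
        cBr C (cTo C A B) E = cComp C (cTm C (cBr C A E) (cId C B)) (cTm C (cId C A) (cBr C B E))) \<and>
    \<comment> \<open>every idempotent splits\<close>
    (\<forall>A \<in> cObj C. \<forall>e \<in> hom C A A. cComp C e e = e \<longrightarrow>
       (\<exists>X \<in> cObj C. \<exists>p \<in> hom C A X. \<exists>i \<in> hom C X A.
          cComp C i p = e \<and> cComp C p i = cId C X))"

definition cBrInv :: "('o,'m) bmcat \<Rightarrow> 'o \<Rightarrow> 'o \<Rightarrow> 'm" where
  "cBrInv C A B = (THE h. h \<in> hom C (cTo C B A) (cTo C A B) \<and>
      cComp C h (cBr C A B) = cId C (cTo C A B) \<and> cComp C (cBr C A B) h = cId C (cTo C B A))"

definition is_algebra :: "('o,'m) bmcat \<Rightarrow> 'o \<Rightarrow> 'm \<Rightarrow> 'm \<Rightarrow> bool" where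
  "is_algebra C A \<eta> \<mu> \<longleftrightarrow> A \<in> cObj C \<and>
     \<eta> \<in> hom C (cUnit C) A \<and> \<mu> \<in> hom C (cTo C A A) A \<and>
     cComp C \<mu> (cTm C \<mu> (cId C A)) = cComp C \<mu> (cTm C (cId C A) \<mu>) \<and>
     cComp C \<mu> (cTm C \<eta> (cId C A)) = cId C A \<and>
     cComp C \<mu> (cTm C (cId C A) \<eta>) = cId C A"

definition is_coalgebra :: "('o,'m) bmcat \<Rightarrow> 'o \<Rightarrow> 'm \<Rightarrow> 'm \<Rightarrow> bool" where
  "is_coalgebra C A \<epsilon> \<delta> \<longleftrightarrow> A \<in> cObj C \<and>
     \<epsilon> \<in> hom C A (cUnit C) \<and> \<delta> \<in> hom C A (cTo C A A) \<and>
     cComp C (cTm C \<delta> (cId C A)) \<delta> = cComp C (cTm C (cId C A) \<delta>) \<delta> \<and>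
     cComp C (cTm C \<epsilon> (cId C A)) \<delta> = cId C A \<and>
     cComp C (cTm C (cId C A) \<epsilon>) \<delta> = cId C A"

definition conv :: "('o,'m) bmcat \<Rightarrow> 'm \<Rightarrow> 'm \<Rightarrow> 'm \<Rightarrow> 'm \<Rightarrow> 'm" where
  "conv C \<mu> \<delta> f g = cComp C \<mu> (cComp C (cTm C f g) \<delta>)"

definition PiL :: "('o,'m) bmcat \<Rightarrow> 'o \<Rightarrow> 'm \<Rightarrow> 'm \<Rightarrow> 'm \<Rightarrow> 'm \<Rightarrow> 'm" where
  "PiL C D \<eta> \<mu> \<epsilon> \<delta> =
     cComp C (cTm C (cComp C \<epsilon> \<mu>) (cId C D))
       (cComp C (cTm C (cId C D) (cBr C D D)) (cTm C (cComp C \<delta> \<eta>) (cId C D)))"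

definition PiR :: "('o,'m) bmcat \<Rightarrow> 'o \<Rightarrow> 'm \<Rightarrow> 'm \<Rightarrow> 'm \<Rightarrow> 'm \<Rightarrow> 'm" where
  "PiR C D \<eta> \<mu> \<epsilon> \<delta> =
     cComp C (cTm C (cId C D) (cComp C \<epsilon> \<mu>))
       (cComp C (cTm C (cBr C D D) (cId C D)) (cTm C (cId C D) (cComp C \<delta> \<eta>)))"

definition weak_bialgebra :: "('o,'m) bmcat \<Rightarrow> 'o \<Rightarrow> 'm \<Rightarrow> 'm \<Rightarrow> 'm \<Rightarrow> 'm \<Rightarrow> bool" where
  "weak_bialgebra C D \<eta> \<mu> \<epsilon> \<delta> \<longleftrightarrow>
     is_algebra C D \<eta> \<mu> \<and> is_coalgebra C D \<epsilon> \<delta> \<and>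
     cComp C \<delta> \<mu> =
       cComp C (cTm C \<mu> \<mu>)
         (cComp C (cTm C (cTm C (cId C D) (cBr C D D)) (cId C D)) (cTm C \<delta> \<delta>)) \<and>
     cComp C \<epsilon> (cComp C \<mu> (cTm C \<mu> (cId C D))) =
       cComp C (cTm C (cComp C \<epsilon> \<mu>) (cComp C \<epsilon> \<mu>))
         (cTm C (cTm C (cId C D) \<delta>) (cId C D)) \<and>
     cComp C \<epsilon> (cComp C \<mu> (cTm C \<mu> (cId C D))) =
       cComp C (cTm C (cComp C \<epsilon> \<mu>) (cComp C \<epsilon> \<mu>))
         (cTm C (cTm C (cId C D) (cComp C (cBrInv C D D) \<delta>)) (cId C D)) \<and>
     cComp C (cTm C \<delta> (cId C D)) (cComp C \<delta> \<eta>) =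
       cComp C (cTm C (cTm C (cId C D) \<mu>) (cId C D))
         (cTm C (cComp C \<delta> \<eta>) (cComp C \<delta> \<eta>)) \<and>
     cComp C (cTm C \<delta> (cId C D)) (cComp C \<delta> \<eta>) =
       cComp C (cTm C (cTm C (cId C D) (cComp C \<mu> (cBrInv C D D))) (cId C D))
         (cTm C (cComp C \<delta> \<eta>) (cComp C \<delta> \<eta>))"

definition weak_hopf_algebra ::
  "('o,'m) bmcat \<Rightarrow> 'o \<Rightarrow> 'm \<Rightarrow> 'm \<Rightarrow> 'm \<Rightarrow> 'm \<Rightarrow> 'm \<Rightarrow> bool" where
  "weak_hopf_algebra C D \<eta> \<mu> \<epsilon> \<delta> lam \<longleftrightarrow>
     weak_bialgebra C D \<eta> \<mu> \<epsilon> \<delta> \<and> lam \<in> hom C D D \<and>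
     conv C \<mu> \<delta> (cId C D) lam = PiL C D \<eta> \<mu> \<epsilon> \<delta> \<and>
     conv C \<mu> \<delta> lam (cId C D) = PiR C D \<eta> \<mu> \<epsilon> \<delta> \<and>
     conv C \<mu> \<delta> (conv C \<mu> \<delta> lam (cId C D)) lam = lam"

definition algebra_morphism ::
  "('o,'m) bmcat \<Rightarrow> 'o \<Rightarrow> 'm \<Rightarrow> 'm \<Rightarrow> 'o \<Rightarrow> 'm \<Rightarrow> 'm \<Rightarrow> 'm \<Rightarrow> bool" where
  "algebra_morphism C A \<eta>A \<mu>A B \<eta>B \<mu>B f \<longleftrightarrow> f \<in> hom C A B \<and>
     cComp C f \<eta>A = \<eta>B \<and> cComp C f \<mu>A = cComp C \<mu>B (cTm C f f)"

definition coalgebra_morphism ::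
  "('o,'m) bmcat \<Rightarrow> 'o \<Rightarrow> 'm \<Rightarrow> 'm \<Rightarrow> 'o \<Rightarrow> 'm \<Rightarrow> 'm \<Rightarrow> 'm \<Rightarrow> bool" where
  "coalgebra_morphism C A \<epsilon>A \<delta>A B \<epsilon>B \<delta>B f \<longleftrightarrow> f \<in> hom C A B \<and>
     cComp C \<epsilon>B f = \<epsilon>A \<and> cComp C \<delta>B f = cComp C (cTm C f f) \<delta>A"

definition weak_projection ::
  "('o,'m) bmcat \<Rightarrow> 'o \<Rightarrow> 'm \<Rightarrow> 'm \<Rightarrow> 'm \<Rightarrow> 'm \<Rightarrow>
   'o \<Rightarrow> 'm \<Rightarrow> 'm \<Rightarrow> 'm \<Rightarrow> 'm \<Rightarrow> 'm \<Rightarrow> 'm \<Rightarrow> 'm \<Rightarrow> bool" where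
  "weak_projection C D \<eta>D \<mu>D \<epsilon>D \<delta>D B \<eta>B \<mu>B \<epsilon>B \<delta>B lamB f g \<longleftrightarrow>
     weak_bialgebra C D \<eta>D \<mu>D \<epsilon>D \<delta>D \<and>
     weak_hopf_algebra C B \<eta>B \<mu>B \<epsilon>B \<delta>B lamB \<and>
     algebra_morphism C B \<eta>B \<mu>B D \<eta>D \<mu>D f \<and>
     coalgebra_morphism C B \<epsilon>B \<delta>B D \<epsilon>D \<delta>D f \<and>
     coalgebra_morphism C D \<epsilon>D \<delta>D B \<epsilon>B \<delta>B g \<and>
     cComp C g f = cId C B \<and>
     cComp C g (cComp C \<mu>D (cTm C (cId C D) f)) = cComp C \<mu>B (cTm C g (cId C B))"

definition is_coequalizer ::
  "('o,'m) bmcat \<Rightarrow> 'o \<Rightarrow> 'o \<Rightarrow> 'o \<Rightarrow> 'm \<Rightarrow> 'm \<Rightarrow> 'm \<Rightarrow> bool" where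
  "is_coequalizer C S A X u v p \<longleftrightarrow>
     u \<in> hom C S A \<and> v \<in> hom C S A \<and> p \<in> hom C A X \<and>
     cComp C p u = cComp C p v \<and>
     (\<forall>Q \<in> cObj C. \<forall>h \<in> hom C A Q. cComp C h u = cComp C h v \<longrightarrow>
        (\<exists>!w. w \<in> hom C X Q \<and> cComp C w p = h))"

definition phiD :: "('o,'m) bmcat \<Rightarrow> 'o \<Rightarrow> 'm \<Rightarrow> 'm \<Rightarrow> 'm" where
  "phiD C D \<mu>D f = cComp C \<mu>D (cTm C (cId C D) f)"

definition tBD :: "('o,'m) bmcat \<Rightarrow> 'o \<Rightarrow> 'm \<Rightarrow> 'm \<Rightarrow> 'm \<Rightarrow> 'm \<Rightarrow> 'm \<Rightarrow> 'm" where
  "tBD C D \<mu>D \<delta>D lamB f g =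
     cComp C (phiD C D \<mu>D f) (cComp C (cTm C (cId C D) (cComp C lamB g)) \<delta>D)"

definition betaD :: "('o,'m) bmcat \<Rightarrow> 'o \<Rightarrow> 'o \<Rightarrow> 'm \<Rightarrow> 'm \<Rightarrow> 'm \<Rightarrow> 'm \<Rightarrow> 'm" where
  "betaD C D B \<mu>D \<epsilon>D \<delta>D f =
     cComp C (cTm C (cId C D) (cComp C \<epsilon>D (phiD C D \<mu>D f))) (cTm C \<delta>D (cId C B))"

end

theory Submission
  imports Defs
begin


locale bsm =
  fixes C :: "('o,'m) bmcat"
  assumes bsm: "braided_strict_monoidal C"
begin

abbreviation Ob where "Ob \<equiv> cObj C"
definition arr where "arr f \<longleftrightarrow> f \<in> cArr C"
abbreviation dom where "dom \<equiv> cDom C"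
abbreviation cod where "cod \<equiv> cCod C"
abbreviation cp (infixr "\<bullet>" 55) where "g \<bullet> f \<equiv> cComp C g f"
abbreviation tm (infixr "\<otimes>" 65) where "f \<otimes> g \<equiv> cTm C f g"
abbreviation to (infixr "\<odot>" 65) where "A \<odot> B \<equiv> cTo C A B"
abbreviation Id where "Id \<equiv> cId C"
abbreviation K where "K \<equiv> cUnit C"
abbreviation br where "br \<equiv> cBr C"

lemma hom_iff: "f \<in> hom C A B \<longleftrightarrow> arr f \<and> dom f = A \<and> cod f = B"
  by (auto simp: hom_def arr_def)

lemmas P0 = bsm[unfolded braided_strict_monoidal_def]
lemmas ax_obs_raw = P0[THEN conjunct1]
lemmas R0 = P0[THEN conjunct2]
lemmas ax_id_raw = R0[THEN conjunct1]
lemmas R1 = R0[THEN conjunct2]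
lemmas ax_comp_raw = R1[THEN conjunct1]
lemmas R2 = R1[THEN conjunct2]
lemmas ax_idl_raw = R2[THEN conjunct1]
lemmas R3 = R2[THEN conjunct2]
lemmas ax_assoc_raw = R3[THEN conjunct1]
lemmas R4 = R3[THEN conjunct2]
lemmas ax_to_raw = R4[THEN conjunct1]
lemmas R5 = R4[THEN conjunct2]
lemmas ax_tm_raw = R5[THEN conjunct1]
lemmas R6 = R5[THEN conjunct2]
lemmas ax_tmid_raw = R6[THEN conjunct1]
lemmas R7 = R6[THEN conjunct2]
lemmas ax_inter_raw = R7[THEN conjunct1]
lemmas R8 = R7[THEN conjunct2]
lemmas ax_unit_raw = R8[THEN conjunct1]
lemmas R9 = R8[THEN conjunct2]
lemmas ax_toassoc_raw = R9[THEN conjunct1]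
lemmas R10 = R9[THEN conjunct2]
lemmas ax_tounit_raw = R10[THEN conjunct1]
lemmas R11 = R10[THEN conjunct2]
lemmas ax_tmassoc_raw = R11[THEN conjunct1]
lemmas R12 = R11[THEN conjunct2]
lemmas ax_tmunit_raw = R12[THEN conjunct1]
lemmas R13 = R12[THEN conjunct2]
lemmas ax_br_raw = R13[THEN conjunct1]
lemmas R14 = R13[THEN conjunct2]
lemmas ax_nat_raw = R14[THEN conjunct1]
lemmas R15 = R14[THEN conjunct2]
lemmas ax_hex_raw = R15[THEN conjunct1]
lemmas R16 = R15[THEN conjunct2]
lemmas ax_split_raw = R16


lemma arr_dom[simp]: "arr f \<Longrightarrow> dom f \<in> Ob" and arr_cod[simp]: "arr f \<Longrightarrow> cod f \<in> Ob"
  using ax_obs_raw by (auto simp: arr_def)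

lemma Ob_K[simp]: "K \<in> Ob" using ax_unit_raw .

lemma Ob_to[simp]: "A \<in> Ob \<Longrightarrow> B \<in> Ob \<Longrightarrow> A \<odot> B \<in> Ob" using ax_to_raw by blast

lemma to_assoc[simp]: "A \<in> Ob \<Longrightarrow> B \<in> Ob \<Longrightarrow> E \<in> Ob \<Longrightarrow> (A \<odot> B) \<odot> E = A \<odot> (B \<odot> E)"
  using ax_toassoc_raw by blast

lemma to_unit[simp]: "A \<in> Ob \<Longrightarrow> K \<odot> A = A" "A \<in> Ob \<Longrightarrow> A \<odot> K = A"
  using ax_tounit_raw by blast+

lemma Id_props[simp]: "A \<in> Ob \<Longrightarrow> arr (Id A)" "A \<in> Ob \<Longrightarrow> dom (Id A) = A" "A \<in> Ob \<Longrightarrow> cod (Id A) = A"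
  using ax_id_raw[rule_format, of A] by (simp_all add: hom_iff)

lemma comp_props[simp]:
  assumes "arr f" "arr g" "dom g = cod f"
  shows "arr (g \<bullet> f)" "dom (g \<bullet> f) = dom f" "cod (g \<bullet> f) = cod g"
proof -
  have "g \<bullet> f \<in> hom C (dom f) (cod g)"
    using ax_comp_raw[rule_format, of "dom f" "cod f" "cod g" f g] assms by (simp add: hom_iff)
  then show "arr (g \<bullet> f)" "dom (g \<bullet> f) = dom f" "cod (g \<bullet> f) = cod g" by (auto simp: hom_iff)
qed

lemma tm_props[simp]:
  assumes "arr f" "arr g"
  shows "arr (f \<otimes> g)" "dom (f \<otimes> g) = dom f \<odot> dom g" "cod (f \<otimes> g) = cod f \<odot> cod g"
proof -
  have "f \<otimes> g \<in> hom C (dom f \<odot> dom g) (cod f \<odot> cod g)"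
    using ax_tm_raw[rule_format, of "dom f" "cod f" "dom g" "cod g" f g] assms by (simp add: hom_iff)
  then show "arr (f \<otimes> g)" "dom (f \<otimes> g) = dom f \<odot> dom g" "cod (f \<otimes> g) = cod f \<odot> cod g" by (auto simp: hom_iff)
qed

lemma Id_to: "A \<in> Ob \<Longrightarrow> B \<in> Ob \<Longrightarrow> Id (A \<odot> B) = Id A \<otimes> Id B"
  using ax_tmid_raw by auto

lemma idl[simp]: "arr f \<Longrightarrow> cod f = B \<Longrightarrow> Id B \<bullet> f = f"
  using ax_idl_raw[rule_format, of "dom f" "cod f" f] arr_dom[of f] arr_cod[of f] by (simp add: hom_iff)
lemma idr[simp]: "arr f \<Longrightarrow> dom f = A \<Longrightarrow> f \<bullet> Id A = f"
  using ax_idl_raw[rule_format, of "dom f" "cod f" f] arr_dom[of f] arr_cod[of f] by (simp add: hom_iff)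

lemma assoc[simp]: "arr f \<Longrightarrow> arr g \<Longrightarrow> arr h \<Longrightarrow> dom g = cod f \<Longrightarrow> dom h = cod g \<Longrightarrow>
   (h \<bullet> g) \<bullet> f = h \<bullet> (g \<bullet> f)"
  using ax_assoc_raw[rule_format, of "dom f" "cod f" "cod g" "cod h" f g h] by (auto simp: hom_iff)

lemma inter: "arr f \<Longrightarrow> arr g \<Longrightarrow> arr f' \<Longrightarrow> arr g' \<Longrightarrow> dom g = cod f \<Longrightarrow> dom g' = cod f' \<Longrightarrow>
   (g \<otimes> g') \<bullet> (f \<otimes> f') = (g \<bullet> f) \<otimes> (g' \<bullet> f')"
  using ax_inter_raw[rule_format, of "dom f" "cod f" "cod g" "dom f'" "cod f'" "cod g'" f g f' g']
  by (auto simp: hom_iff)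

lemma inter2: "arr f \<Longrightarrow> arr g \<Longrightarrow> arr f' \<Longrightarrow> arr g' \<Longrightarrow> dom g = cod f \<Longrightarrow> dom g' = cod f' \<Longrightarrow>
   arr h \<Longrightarrow> dom f \<odot> dom f' = cod h \<Longrightarrow>
   (g \<otimes> g') \<bullet> ((f \<otimes> f') \<bullet> h) = ((g \<bullet> f) \<otimes> (g' \<bullet> f')) \<bullet> h"
proof -
  assume a: "arr f" "arr g" "arr f'" "arr g'" "dom g = cod f" "dom g' = cod f'" "arr h" "dom f \<odot> dom f' = cod h"
  have "((g \<otimes> g') \<bullet> (f \<otimes> f')) \<bullet> h = (g \<otimes> g') \<bullet> ((f \<otimes> f') \<bullet> h)" using a by simp
  then show ?thesis using a by (simp add: inter)
qed

lemma tm_assoc[simp]: "arr f \<Longrightarrow> arr g \<Longrightarrow> arr h \<Longrightarrow> (f \<otimes> g) \<otimes> h = f \<otimes> (g \<otimes> h)"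
  using ax_tmassoc_raw by (auto simp: arr_def)

lemma tm_unit[simp]: "arr f \<Longrightarrow> Id K \<otimes> f = f" "arr f \<Longrightarrow> f \<otimes> Id K = f"
  using ax_tmunit_raw by (auto simp: arr_def)

lemma br_props[simp]: "A \<in> Ob \<Longrightarrow> B \<in> Ob \<Longrightarrow> arr (br A B)"
   "A \<in> Ob \<Longrightarrow> B \<in> Ob \<Longrightarrow> dom (br A B) = A \<odot> B"
   "A \<in> Ob \<Longrightarrow> B \<in> Ob \<Longrightarrow> cod (br A B) = B \<odot> A"
  using ax_br_raw[rule_format, of A B] by (simp_all add: hom_iff)

lemma nat: "arr f \<Longrightarrow> arr g \<Longrightarrow> br (cod f) (cod g) \<bullet> (f \<otimes> g) = (g \<otimes> f) \<bullet> br (dom f) (dom g)"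
  using ax_nat_raw[rule_format, of "dom f" "cod f" "dom g" "cod g" f g] by (auto simp: hom_iff)

lemma hex1: "A \<in> Ob \<Longrightarrow> B \<in> Ob \<Longrightarrow> E \<in> Ob \<Longrightarrow> br A (B \<odot> E) = (Id B \<otimes> br A E) \<bullet> (br A B \<otimes> Id E)"
  and hex2: "A \<in> Ob \<Longrightarrow> B \<in> Ob \<Longrightarrow> E \<in> Ob \<Longrightarrow> br (A \<odot> B) E = (br A E \<otimes> Id B) \<bullet> (Id A \<otimes> br B E)"
  using ax_hex_raw by blast+

lemma split: "A \<in> Ob \<Longrightarrow> arr e \<Longrightarrow> dom e = A \<Longrightarrow> cod e = A \<Longrightarrow> e \<bullet> e = e \<Longrightarrow>
   (\<exists>X \<in> Ob. \<exists>p i. arr p \<and> dom p = A \<and> cod p = X \<and> arr i \<and> dom i = X \<and> cod i = A \<and> i \<bullet> p = e \<and> p \<bullet> i = Id X)"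
proof -
  assume a: "A \<in> Ob" "arr e" "dom e = A" "cod e = A" "e \<bullet> e = e"
  then have "e \<in> hom C A A" by (simp add: hom_iff)
  from ax_split_raw[rule_format, OF a(1) this a(5)] obtain X p i where
    "X \<in> Ob" "p \<in> hom C A X" "i \<in> hom C X A" "i \<bullet> p = e" "p \<bullet> i = Id X" by blast
  then show ?thesis unfolding hom_iff by blast
qed


lemma Id_to_simp: "A \<in> Ob \<Longrightarrow> B \<in> Ob \<Longrightarrow> Id A \<otimes> Id B = Id (A \<odot> B)"
  using Id_to by simp

section \<open>Typed triples\<close>

definition obj :: "'o list \<Rightarrow> 'o" where "obj xs = foldr (\<lambda>a b. a \<odot> b) xs K"

abbreviation mo :: "'m \<times> 'o list \<times> 'o list \<Rightarrow> 'm" where "mo x \<equiv> fst x"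
abbreviation src :: "'m \<times> 'o list \<times> 'o list \<Rightarrow> 'o list" where "src x \<equiv> fst (snd x)"
abbreviation tgt :: "'m \<times> 'o list \<times> 'o list \<Rightarrow> 'o list" where "tgt x \<equiv> snd (snd x)"

definition ok :: "'m \<times> 'o list \<times> 'o list \<Rightarrow> bool" where
  "ok x \<longleftrightarrow> arr (mo x) \<and> dom (mo x) = obj (src x) \<and> cod (mo x) = obj (tgt x) \<and>
     set (src x) \<subseteq> Ob \<and> set (tgt x) \<subseteq> Ob"

definition cmp (infixr "\<cdot>" 55) where "g \<cdot> f = (mo g \<bullet> mo f, src f, tgt g)"
definition tns (infixr "\<star>" 65) where "f \<star> g = (mo f \<otimes> mo g, src f @ src g, tgt f @ tgt g)"
definition idn where "idn xs = (Id (obj xs), xs, xs)"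
definition lay where "lay xs G ys = idn xs \<star> G \<star> idn ys"

lemma st_simps[simp]:
  "src (g \<cdot> f) = src f" "tgt (g \<cdot> f) = tgt g" "mo (g \<cdot> f) = mo g \<bullet> mo f"
  "src (f \<star> g) = src f @ src g" "tgt (f \<star> g) = tgt f @ tgt g" "mo (f \<star> g) = mo f \<otimes> mo g"
  "src (idn xs) = xs" "tgt (idn xs) = xs" "mo (idn xs) = Id (obj xs)"
  "src (lay xs G ys) = xs @ src G @ ys" "tgt (lay xs G ys) = xs @ tgt G @ ys"
  by (simp_all add: cmp_def tns_def idn_def lay_def)

lemma obj_Nil: "obj [] = K" and obj_Cons: "obj (x # xs) = x \<odot> obj xs" by (simp_all add: obj_def)

lemma obj_Ob[simp]: "set xs \<subseteq> Ob \<Longrightarrow> obj xs \<in> Ob"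
  by (induct xs) (auto simp: obj_Nil obj_Cons)

lemma obj_app: "set xs \<subseteq> Ob \<Longrightarrow> set ys \<subseteq> Ob \<Longrightarrow> obj (xs @ ys) = obj xs \<odot> obj ys"
  by (induct xs) (auto simp: obj_Nil obj_Cons)

lemma obj_simps[simp]: "obj [] = K" "x \<in> Ob \<Longrightarrow> obj [x] = x"
  by (simp_all add: obj_def)

lemma tr_eq: "mo x = mo y \<Longrightarrow> src x = src y \<Longrightarrow> tgt x = tgt y \<Longrightarrow> x = y"
  by (simp add: prod_eq_iff)

lemma ok_cmp[simp]: "ok f \<Longrightarrow> ok g \<Longrightarrow> src g = tgt f \<Longrightarrow> ok (g \<cdot> f)"
  by (simp add: ok_def)
lemma ok_tns[simp]: "ok f \<Longrightarrow> ok g \<Longrightarrow> ok (f \<star> g)"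
  by (simp add: ok_def obj_app)
lemma ok_idn[simp]: "set xs \<subseteq> Ob \<Longrightarrow> ok (idn xs)"
  by (simp add: ok_def)
lemma ok_lay[simp]: "ok G \<Longrightarrow> set xs \<subseteq> Ob \<Longrightarrow> set ys \<subseteq> Ob \<Longrightarrow> ok (lay xs G ys)"
  by (simp add: lay_def)

lemma ok_D: "ok f \<Longrightarrow> arr (mo f)" "ok f \<Longrightarrow> dom (mo f) = obj (src f)" "ok f \<Longrightarrow> cod (mo f) = obj (tgt f)"
  "ok f \<Longrightarrow> set (src f) \<subseteq> Ob" "ok f \<Longrightarrow> set (tgt f) \<subseteq> Ob"
  by (simp_all add: ok_def)

lemma c_assoc: "ok f \<Longrightarrow> ok g \<Longrightarrow> ok h \<Longrightarrow> src g = tgt f \<Longrightarrow> src h = tgt g \<Longrightarrow> (h \<cdot> g) \<cdot> f = h \<cdot> (g \<cdot> f)"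
  by (rule tr_eq) (simp_all add: ok_def)

lemma c_idl: "ok f \<Longrightarrow> tgt f = xs \<Longrightarrow> idn xs \<cdot> f = f"
  by (rule tr_eq) (auto simp: ok_def)
lemma c_idr: "ok f \<Longrightarrow> src f = xs \<Longrightarrow> f \<cdot> idn xs = f"
  by (rule tr_eq) (auto simp: ok_def)

lemma t_idn: "set xs \<subseteq> Ob \<Longrightarrow> set ys \<subseteq> Ob \<Longrightarrow> idn xs \<star> idn ys = idn (xs @ ys)"
  by (rule tr_eq) (simp_all add: obj_app Id_to_simp)

lemma t_assoc: "ok f \<Longrightarrow> ok g \<Longrightarrow> ok h \<Longrightarrow> (f \<star> g) \<star> h = f \<star> (g \<star> h)"
  by (rule tr_eq) (simp_all add: ok_def)

lemma t_unitL: "ok f \<Longrightarrow> idn [] \<star> f = f" and t_unitR: "ok f \<Longrightarrow> f \<star> idn [] = f"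
  by (rule tr_eq; simp add: ok_def)+

lemma inter_t: "ok f \<Longrightarrow> ok g \<Longrightarrow> ok f' \<Longrightarrow> ok g' \<Longrightarrow> src g = tgt f \<Longrightarrow> src g' = tgt f' \<Longrightarrow>
   (g \<star> g') \<cdot> (f \<star> f') = (g \<cdot> f) \<star> (g' \<cdot> f')"
  by (rule tr_eq) (simp_all add: ok_def inter)

lemma t_cmpL: "ok f1 \<Longrightarrow> ok f2 \<Longrightarrow> ok h \<Longrightarrow> src f1 = tgt f2 \<Longrightarrow>
   (f1 \<cdot> f2) \<star> h = (f1 \<star> idn (tgt h)) \<cdot> (f2 \<star> h)"
  using inter_t[of f2 f1 h "idn (tgt h)"] by (simp add: c_idl ok_D)

lemma t_cmpR: "ok f1 \<Longrightarrow> ok f2 \<Longrightarrow> ok h \<Longrightarrow> src f1 = tgt f2 \<Longrightarrow>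
   h \<star> (f1 \<cdot> f2) = (idn (tgt h) \<star> f1) \<cdot> (h \<star> f2)"
  using inter_t[of h "idn (tgt h)" f2 f1] by (simp add: c_idl ok_D)

lemma lay_ok_sets: "set xs \<subseteq> Ob \<Longrightarrow> set ys \<subseteq> Ob \<Longrightarrow> ok G \<Longrightarrow> lay xs G ys = idn xs \<star> G \<star> idn ys"
  by (simp add: lay_def)

lemma t_layL: "ok G \<Longrightarrow> set xs \<subseteq> Ob \<Longrightarrow> set ys \<subseteq> Ob \<Longrightarrow> set zs \<subseteq> Ob \<Longrightarrow>
   lay xs G ys \<star> idn zs = lay xs G (ys @ zs)"
  by (simp add: lay_def t_assoc t_idn)
lemma t_layR: "ok G \<Longrightarrow> set xs \<subseteq> Ob \<Longrightarrow> set ys \<subseteq> Ob \<Longrightarrow> set zs \<subseteq> Ob \<Longrightarrow>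
   idn zs \<star> lay xs G ys = lay (zs @ xs) G ys"
  by (simp add: lay_def flip: t_assoc t_idn)

lemma t_layLay: "ok G \<Longrightarrow> ok H \<Longrightarrow> set xs \<subseteq> Ob \<Longrightarrow> set ys \<subseteq> Ob \<Longrightarrow> set xs' \<subseteq> Ob \<Longrightarrow> set ys' \<subseteq> Ob \<Longrightarrow>
   lay xs G ys \<star> lay xs' H ys' = lay xs G (ys @ xs' @ tgt H @ ys') \<cdot> lay (xs @ src G @ ys @ xs') H ys'"
proof -
  assume a: "ok G" "ok H" "set xs \<subseteq> Ob" "set ys \<subseteq> Ob" "set xs' \<subseteq> Ob" "set ys' \<subseteq> Ob"
  have "lay xs G ys \<star> lay xs' H ys' = (lay xs G ys \<cdot> idn (src (lay xs G ys))) \<star> (idn (tgt (lay xs' H ys')) \<cdot> lay xs' H ys')"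
    using a by (simp add: c_idl c_idr ok_D)
  also have "\<dots> = (lay xs G ys \<star> idn (tgt (lay xs' H ys'))) \<cdot> (idn (src (lay xs G ys)) \<star> lay xs' H ys')"
    using a by (subst inter_t) (simp_all add: ok_D)
  also have "\<dots> = lay xs G (ys @ xs' @ tgt H @ ys') \<cdot> lay (xs @ src G @ ys @ xs') H ys'"
    using a by (simp add: t_layL t_layR ok_D)
  finally show ?thesis .
qed


lemma t_layLay2: "ok G \<Longrightarrow> ok H \<Longrightarrow> set xs \<subseteq> Ob \<Longrightarrow> set ys \<subseteq> Ob \<Longrightarrow> set xs' \<subseteq> Ob \<Longrightarrow> set ys' \<subseteq> Ob \<Longrightarrow>
   lay xs G ys \<star> lay xs' H ys' = lay (xs @ tgt G @ ys @ xs') H ys' \<cdot> lay xs G (ys @ xs' @ src H @ ys')"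
proof -
  assume a: "ok G" "ok H" "set xs \<subseteq> Ob" "set ys \<subseteq> Ob" "set xs' \<subseteq> Ob" "set ys' \<subseteq> Ob"
  have "lay xs G ys \<star> lay xs' H ys' = (idn (tgt (lay xs G ys)) \<cdot> lay xs G ys) \<star> (lay xs' H ys' \<cdot> idn (src (lay xs' H ys')))"
    using a by (simp add: c_idl c_idr ok_D)
  also have "\<dots> = (idn (tgt (lay xs G ys)) \<star> lay xs' H ys') \<cdot> (lay xs G ys \<star> idn (src (lay xs' H ys')))"
    using a by (subst inter_t) (simp_all add: ok_D)
  also have "\<dots> = lay (xs @ tgt G @ ys @ xs') H ys' \<cdot> lay xs G (ys @ xs' @ src H @ ys')"
    using a by (simp add: t_layL t_layR ok_D)
  finally show ?thesis .
qed

lemma swap0: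
  assumes "ok G" "ok H" "set xs \<subseteq> Ob" "set ys \<subseteq> Ob" "set xs' \<subseteq> Ob" "set ys' \<subseteq> Ob"
    and eq: "xs @ src G @ ys = xs' @ tgt H @ ys'" and le: "length xs + length (src G) \<le> length xs'"
  shows "lay xs G ys \<cdot> lay xs' H ys' =
    lay (xs @ tgt G @ drop (length xs + length (src G)) xs') H ys' \<cdot>
    lay xs G (drop (length xs + length (src G)) xs' @ src H @ ys')"
proof -
  define zs where "zs = drop (length xs + length (src G)) xs'"
  have 1: "xs' = xs @ src G @ zs"
  proof -
    have "take (length xs + length (src G)) (xs @ src G @ ys) = take (length xs + length (src G)) (xs' @ tgt H @ ys')"
      using eq by simp
    then have "xs @ src G = take (length xs + length (src G)) xs'" using le by simp
    then show ?thesis unfolding zs_def by (metis append.assoc append_take_drop_id)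
  qed
  have 2: "ys = zs @ tgt H @ ys'" using eq unfolding 1 by simp
  have zo: "set zs \<subseteq> Ob" using assms(5) 1 by auto
  have "lay xs G zs \<star> lay [] H ys' = lay xs G ys \<cdot> lay xs' H ys'"
    using t_layLay[of G H xs zs "[]" ys'] assms zo unfolding 1 2 by simp
  moreover have "lay xs G zs \<star> lay [] H ys' = lay (xs @ tgt G @ zs) H ys' \<cdot> lay xs G (zs @ src H @ ys')"
    using t_layLay2[of G H xs zs "[]" ys'] assms zo by simp
  ultimately show ?thesis unfolding zs_def by simp
qed

lemma swap:
  assumes "ok G" "ok H" "set xs \<subseteq> Ob" "set ys \<subseteq> Ob" "set xs' \<subseteq> Ob" "set ys' \<subseteq> Ob"
    and "xs @ src G @ ys = xs' @ tgt H @ ys'" and "length xs + length (src G) \<le> length xs'"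
    and "\<not> length xs' + length (tgt H) \<le> length xs"
  shows "lay xs G ys \<cdot> lay xs' H ys' =
    lay (xs @ tgt G @ drop (length xs + length (src G)) xs') H ys' \<cdot>
    lay xs G (drop (length xs + length (src G)) xs' @ src H @ ys')"
  using swap0 assms by blast

lemma swap_split: "xs @ gs @ ys = xs' @ hs @ ys' \<Longrightarrow> length xs + length gs \<le> length xs' \<Longrightarrow>
   xs' = xs @ gs @ drop (length xs + length gs) xs'"
proof -
  assume eq: "xs @ gs @ ys = xs' @ hs @ ys'" and le: "length xs + length gs \<le> length xs'"
  have "take (length xs + length gs) (xs @ gs @ ys) = take (length xs + length gs) (xs' @ hs @ ys')"
    using eq by simp
  then have "xs @ gs = take (length xs + length gs) xs'" using le by simp
  then show ?thesis by (metis append.assoc append_take_drop_id)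
qed

lemma swapT:
  assumes "ok G" "ok H" "set xs \<subseteq> Ob" "set ys \<subseteq> Ob" "set xs' \<subseteq> Ob" "set ys' \<subseteq> Ob"
    and "xs @ src G @ ys = xs' @ tgt H @ ys'" and "length xs + length (src G) \<le> length xs'"
    and "\<not> length xs' + length (tgt H) \<le> length xs"
    and "ok R" "tgt R = xs' @ src H @ ys'"
  shows "lay xs G ys \<cdot> (lay xs' H ys' \<cdot> R) =
    lay (xs @ tgt G @ drop (length xs + length (src G)) xs') H ys' \<cdot>
    (lay xs G (drop (length xs + length (src G)) xs' @ src H @ ys') \<cdot> R)"
proof -
  have sp: "xs' = xs @ src G @ drop (length xs + length (src G)) xs'"
    using swap_split assms(7,8) by blast
  have zo: "set (drop (length xs + length (src G)) xs') \<subseteq> Ob" using assms(5) by (meson order_trans set_drop_subset)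
  have "lay xs G ys \<cdot> (lay xs' H ys' \<cdot> R) = (lay xs G ys \<cdot> lay xs' H ys') \<cdot> R"
    using assms by (simp add: c_assoc)
  also have "\<dots> = (lay (xs @ tgt G @ drop (length xs + length (src G)) xs') H ys' \<cdot>
    lay xs G (drop (length xs + length (src G)) xs' @ src H @ ys')) \<cdot> R"
    using swap0 assms by simp
  also have "\<dots> = lay (xs @ tgt G @ drop (length xs + length (src G)) xs') H ys' \<cdot>
    (lay xs G (drop (length xs + length (src G)) xs' @ src H @ ys') \<cdot> R)"
    apply (rule c_assoc)
    using assms zo ok_D[of G] ok_D[of H] apply (simp_all)
    using sp by simp
  finally show ?thesis .
qed

lemma gen_cL: "ok (m,a,b) \<Longrightarrow> (m,a,b) \<cdot> f = lay [] (m,a,b) [] \<cdot> f"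
  and gen_cR: "ok (m,a,b) \<Longrightarrow> f \<cdot> (m,a,b) = f \<cdot> lay [] (m,a,b) []"
  and gen_tL: "ok (m,a,b) \<Longrightarrow> (m,a,b) \<star> f = lay [] (m,a,b) [] \<star> f"
  and gen_tR: "ok (m,a,b) \<Longrightarrow> f \<star> (m,a,b) = f \<star> lay [] (m,a,b) []"
  by (simp_all add: lay_def t_unitL t_unitR)

lemma lay_gen: "ok G \<Longrightarrow> lay [] G [] = G" by (simp add: lay_def t_unitL t_unitR)




section \<open>Braiding\<close>

lemma brinv: assumes "A \<in> Ob" "B \<in> Ob"
  shows "arr (cBrInv C A B)" "dom (cBrInv C A B) = B \<odot> A" "cod (cBrInv C A B) = A \<odot> B"
    "cBrInv C A B \<bullet> br A B = Id (A \<odot> B)" "br A B \<bullet> cBrInv C A B = Id (B \<odot> A)"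
proof -
  obtain h where h: "h \<in> hom C (B \<odot> A) (A \<odot> B)" "h \<bullet> br A B = Id (A \<odot> B)" "br A B \<bullet> h = Id (B \<odot> A)"
    using ax_br_raw assms by blast
  have hh: "arr h" "dom h = B \<odot> A" "cod h = A \<odot> B" using h(1) by (simp_all add: hom_iff)
  have bb: "arr (br A B)" "dom (br A B) = A \<odot> B" "cod (br A B) = B \<odot> A" using assms by simp_all
  have uniq: "h' = h" if "h' \<in> hom C (B \<odot> A) (A \<odot> B)" "h' \<bullet> br A B = Id (A \<odot> B)" "br A B \<bullet> h' = Id (B \<odot> A)" for h'
  proof -
    have t: "arr h'" "dom h' = B \<odot> A" "cod h' = A \<odot> B" using that(1) by (simp_all add: hom_iff)
    have "h' = h' \<bullet> Id (B \<odot> A)" using t by simp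
    also have "\<dots> = h' \<bullet> (br A B \<bullet> h)" using h(3) by simp
    also have "\<dots> = (h' \<bullet> br A B) \<bullet> h" using assoc[OF hh(1) bb(1) t(1)] hh bb t by simp
    also have "\<dots> = Id (A \<odot> B) \<bullet> h" using that(2) by simp
    also have "\<dots> = h" using hh by simp
    finally show ?thesis .
  qed
  have "cBrInv C A B = h" unfolding cBrInv_def
    apply (rule the_equality)
     apply (rule conjI, rule h(1), rule conjI, rule h(2), rule h(3))
    using uniq by blast
  then show "arr (cBrInv C A B)" "dom (cBrInv C A B) = B \<odot> A" "cod (cBrInv C A B) = A \<odot> B"
    "cBrInv C A B \<bullet> br A B = Id (A \<odot> B)" "br A B \<bullet> cBrInv C A B = Id (B \<odot> A)"
    using h hh by simp_all
qed

lemma br_iso_cancel: assumes "A \<in> Ob" "B \<in> Ob" "br A B \<bullet> x = br A B \<bullet> y" "arr x" "arr y" "cod x = A \<odot> B" "cod y = A \<odot> B"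
  shows "x = y"
proof -
  note b = brinv[OF assms(1,2)]
  have bb: "arr (br A B)" "dom (br A B) = A \<odot> B" "cod (br A B) = B \<odot> A" using assms by simp_all
  have "x = Id (A \<odot> B) \<bullet> x" using assms by simp
  also have "\<dots> = (cBrInv C A B \<bullet> br A B) \<bullet> x" using b by simp
  also have "\<dots> = cBrInv C A B \<bullet> (br A B \<bullet> x)" using assoc[OF assms(4) bb(1) b(1)] assms b bb by simp
  also have "\<dots> = cBrInv C A B \<bullet> (br A B \<bullet> y)" using assms by simp
  also have "\<dots> = (cBrInv C A B \<bullet> br A B) \<bullet> y" using assoc[OF assms(5) bb(1) b(1)] assms b bb by simp
  also have "\<dots> = y" using assms b by simp
  finally show ?thesis .
qed

lemma br_K: assumes "A \<in> Ob" shows "br K A = Id A"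
proof -
  have "br (K \<odot> K) A = (br K A \<otimes> Id K) \<bullet> (Id K \<otimes> br K A)" using hex2[of K K A] assms by simp
  then have e: "br K A = br K A \<bullet> br K A" using assms by simp
  show ?thesis
    apply (rule br_iso_cancel[of K A])
    using assms e by simp_all
qed

lemma br_K2: assumes "A \<in> Ob" shows "br A K = Id A"
proof -
  have "br A (K \<odot> K) = (Id K \<otimes> br A K) \<bullet> (br A K \<otimes> Id K)" using hex1[of A K K] assms by simp
  then have e: "br A K = br A K \<bullet> br A K" using assms by simp
  show ?thesis
    apply (rule br_iso_cancel[of A K])
    using assms e by simp_all
qed

definition c :: "'o \<Rightarrow> 'o \<Rightarrow> 'm \<times> 'o list \<times> 'o list" where "c x y = (br x y, [x,y], [y,x])"
definition ci :: "'o \<Rightarrow> 'o \<Rightarrow> 'm \<times> 'o list \<times> 'o list" where "ci x y = (cBrInv C x y, [y,x], [x,y])"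

fun brA where
  "brA x [] = idn [x]"
| "brA x (y # ys) = (idn [y] \<star> brA x ys) \<cdot> (c x y \<star> idn ys)"
fun brl where
  "brl [] ys = idn ys"
| "brl (x # xs) ys = (brA x ys \<star> idn xs) \<cdot> (idn [x] \<star> brl xs ys)"

lemma c_simps[simp]: "src (c x y) = [x,y]" "tgt (c x y) = [y,x]" "mo (c x y) = br x y"
   "src (ci x y) = [y,x]" "tgt (ci x y) = [x,y]" "mo (ci x y) = cBrInv C x y"
  by (simp_all add: c_def ci_def)

lemma ok_c[simp]: "x \<in> Ob \<Longrightarrow> y \<in> Ob \<Longrightarrow> ok (c x y)"
  by (simp add: c_def ok_def obj_Cons)
lemma ok_ci[simp]: "x \<in> Ob \<Longrightarrow> y \<in> Ob \<Longrightarrow> ok (ci x y)"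
  by (simp add: ci_def ok_def obj_Cons brinv)

lemma brA_ok: "x \<in> Ob \<Longrightarrow> set ys \<subseteq> Ob \<Longrightarrow> ok (brA x ys) \<and> src (brA x ys) = x # ys \<and> tgt (brA x ys) = ys @ [x]
   \<and> mo (brA x ys) = br x (obj ys)"
proof (induct ys)
  case Nil then show ?case by (simp add: br_K2)
next
  case (Cons y ys)
  then show ?case
    by (simp add: obj_Cons hex1)
qed

lemma brl_ok: "set xs \<subseteq> Ob \<Longrightarrow> set ys \<subseteq> Ob \<Longrightarrow> ok (brl xs ys) \<and> src (brl xs ys) = xs @ ys \<and> tgt (brl xs ys) = ys @ xs
   \<and> mo (brl xs ys) = br (obj xs) (obj ys)"
proof (induct xs)
  case Nil then show ?case by (simp add: br_K)
next
  case (Cons x xs)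
  then show ?case using brA_ok[of x ys]
    by (simp add: obj_Cons hex2 obj_app)
qed

lemma natl: "ok f \<Longrightarrow> ok g \<Longrightarrow> brl (tgt f) (tgt g) \<cdot> (f \<star> g) = (g \<star> f) \<cdot> brl (src f) (src g)"
  apply (rule tr_eq)
  using brl_ok[of "tgt f" "tgt g"] brl_ok[of "src f" "src g"] nat[of "mo f" "mo g"]
  by (simp_all add: ok_def)

lemma genc_cL: "x \<in> Ob \<Longrightarrow> y \<in> Ob \<Longrightarrow> c x y \<cdot> f = lay [] (c x y) [] \<cdot> f"
  and genc_cR: "x \<in> Ob \<Longrightarrow> y \<in> Ob \<Longrightarrow> f \<cdot> c x y = f \<cdot> lay [] (c x y) []"
  and genc_tL: "x \<in> Ob \<Longrightarrow> y \<in> Ob \<Longrightarrow> c x y \<star> f = lay [] (c x y) [] \<star> f"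
  and genc_tR: "x \<in> Ob \<Longrightarrow> y \<in> Ob \<Longrightarrow> f \<star> c x y = f \<star> lay [] (c x y) []"
  and genci_cL: "x \<in> Ob \<Longrightarrow> y \<in> Ob \<Longrightarrow> ci x y \<cdot> f = lay [] (ci x y) [] \<cdot> f"
  and genci_cR: "x \<in> Ob \<Longrightarrow> y \<in> Ob \<Longrightarrow> f \<cdot> ci x y = f \<cdot> lay [] (ci x y) []"
  and genci_tL: "x \<in> Ob \<Longrightarrow> y \<in> Ob \<Longrightarrow> ci x y \<star> f = lay [] (ci x y) [] \<star> f"
  and genci_tR: "x \<in> Ob \<Longrightarrow> y \<in> Ob \<Longrightarrow> f \<star> ci x y = f \<star> lay [] (ci x y) []"
  by (simp_all add: lay_def t_unitL t_unitR)

lemmas nf = c_assoc c_idl c_idr t_idn t_cmpL t_cmpR t_layL t_layR t_layLay gen_cL gen_cR gen_tL gen_tR swap swapT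
  genc_cL genc_cR genc_tL genc_tR genci_cL genci_cR genci_tL genci_tR

end




context bsm begin

definition ltr :: "'o list \<times> ('m \<times> 'o list \<times> 'o list) \<times> 'o list \<Rightarrow> 'm \<times> 'o list \<times> 'o list" where
  "ltr L = lay (fst L) (fst (snd L)) (snd (snd L))"
definition lsrc :: "'o list \<times> ('m \<times> 'o list \<times> 'o list) \<times> 'o list \<Rightarrow> 'o list" where
  "lsrc L = fst L @ src (fst (snd L)) @ snd (snd L)"
definition ltgt :: "'o list \<times> ('m \<times> 'o list \<times> 'o list) \<times> 'o list \<Rightarrow> 'o list" where
  "ltgt L = fst L @ tgt (fst (snd L)) @ snd (snd L)"
definition okL :: "'o list \<times> ('m \<times> 'o list \<times> 'o list) \<times> 'o list \<Rightarrow> bool" where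
  "okL L \<longleftrightarrow> ok (fst (snd L)) \<and> set (fst L) \<subseteq> Ob \<and> set (snd (snd L)) \<subseteq> Ob"

fun lchain :: "('o list \<times> ('m \<times> 'o list \<times> 'o list) \<times> 'o list) list \<Rightarrow> 'o list \<Rightarrow> 'o list \<Rightarrow> bool" where
  "lchain [] s t \<longleftrightarrow> s = t"
| "lchain (L # Ls) s t \<longleftrightarrow> okL L \<and> ltgt L = t \<and> lchain Ls s (lsrc L)"

fun chsem :: "('o list \<times> ('m \<times> 'o list \<times> 'o list) \<times> 'o list) list \<Rightarrow> 'o list \<Rightarrow> 'm \<times> 'o list \<times> 'o list" where
  "chsem [] s = idn s"
| "chsem (L # Ls) s = ltr L \<cdot> chsem Ls s"

lemma ltr_props: "okL L \<Longrightarrow> ok (ltr L) \<and> src (ltr L) = lsrc L \<and> tgt (ltr L) = ltgt L"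
  by (simp add: okL_def ltr_def lsrc_def ltgt_def)

lemma chsem_ok: "lchain Ls s t \<Longrightarrow> set s \<subseteq> Ob \<Longrightarrow>
   ok (chsem Ls s) \<and> src (chsem Ls s) = s \<and> tgt (chsem Ls s) = t"
proof (induct Ls arbitrary: t)
  case Nil then show ?case by simp
next
  case (Cons L Ls)
  then show ?case using ltr_props[of L] by auto
qed

lemma chsem_app: "lchain Lg sg tg \<Longrightarrow> lchain Lf sf sg \<Longrightarrow> set sf \<subseteq> Ob \<Longrightarrow>
   lchain (Lg @ Lf) sf tg \<and> chsem (Lg @ Lf) sf = chsem Lg sg \<cdot> chsem Lf sf"
proof (induct Lg arbitrary: tg)
  case Nil then show ?case using chsem_ok[of Lf sf sg] by (simp add: c_idl)
next
  case (Cons L Lg)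
  have sg: "set sg \<subseteq> Ob" using chsem_ok[of Lf sf sg] Cons ok_D(5)[of "chsem Lf sf"] by auto
  have o1: "ok (chsem Lg sg)" "src (chsem Lg sg) = sg" "tgt (chsem Lg sg) = lsrc L"
    using chsem_ok[of Lg sg "lsrc L"] Cons sg by auto
  have o2: "ok (chsem Lf sf)" "src (chsem Lf sf) = sf" "tgt (chsem Lf sf) = sg"
    using chsem_ok[of Lf sf sg] Cons by auto
  have o3: "ok (ltr L)" "src (ltr L) = lsrc L" using ltr_props[of L] Cons by auto
  have IH: "lchain (Lg @ Lf) sf (lsrc L) \<and> chsem (Lg @ Lf) sf = chsem Lg sg \<cdot> chsem Lf sf"
    using Cons(1)[of "lsrc L"] Cons(2-4) by auto
  show ?case using Cons(2) IH o1 o2 o3 by (simp add: c_assoc)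
qed

definition wf :: "('o list \<times> ('m \<times> 'o list \<times> 'o list) \<times> 'o list) list \<times> 'o list \<times> 'o list \<Rightarrow> bool" where
  "wf D \<longleftrightarrow> lchain (fst D) (fst (snd D)) (snd (snd D)) \<and> set (fst (snd D)) \<subseteq> Ob \<and> set (snd (snd D)) \<subseteq> Ob"
definition dtr :: "('o list \<times> ('m \<times> 'o list \<times> 'o list) \<times> 'o list) list \<times> 'o list \<times> 'o list \<Rightarrow> 'm \<times> 'o list \<times> 'o list" where
  "dtr D = chsem (fst D) (fst (snd D))"

lemma dtr_ok: "wf D \<Longrightarrow> ok (dtr D) \<and> src (dtr D) = fst (snd D) \<and> tgt (dtr D) = snd (snd D)"
  unfolding wf_def dtr_def using chsem_ok by blast

definition dcmp (infixr "\<diamond>" 55) where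
  "g \<diamond> f = (fst g @ fst f, fst (snd f), snd (snd g))"
definition addR where "addR zs L = (fst L, fst (snd L), snd (snd L) @ zs)"
definition addL where "addL zs L = (zs @ fst L, fst (snd L), snd (snd L))"
definition dtns (infixr "\<oplus>" 65) where
  "f \<oplus> g = (map (addR (snd (snd g))) (fst f) @ map (addL (fst (snd f))) (fst g),
             fst (snd f) @ fst (snd g), snd (snd f) @ snd (snd g))"
definition didn where "didn xs = ([], xs, xs)"
definition dgen where "dgen G = ([([], G, [])], src G, tgt G)"

lemma wf_dcmp: "wf f \<Longrightarrow> wf g \<Longrightarrow> fst (snd g) = snd (snd f) \<Longrightarrow> wf (g \<diamond> f) \<and> dtr (g \<diamond> f) = dtr g \<cdot> dtr f"
  unfolding wf_def dtr_def dcmp_def using chsem_app by auto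

lemma chsem_addR: "lchain Lf sf tf \<Longrightarrow> set zs \<subseteq> Ob \<Longrightarrow> set sf \<subseteq> Ob \<Longrightarrow>
   lchain (map (addR zs) Lf) (sf @ zs) (tf @ zs) \<and> chsem (map (addR zs) Lf) (sf @ zs) = chsem Lf sf \<star> idn zs"
proof (induct Lf arbitrary: tf)
  case Nil then show ?case by (simp add: t_idn)
next
  case (Cons L Lf)
  have o1: "ok (chsem Lf sf)" "src (chsem Lf sf) = sf" "tgt (chsem Lf sf) = lsrc L"
    using chsem_ok[of Lf sf "lsrc L"] Cons by auto
  have o3: "ok (ltr L)" "src (ltr L) = lsrc L" using ltr_props[of L] Cons by auto
  have e1: "ltr (addR zs L) = ltr L \<star> idn zs" using Cons
    by (simp add: ltr_def addR_def okL_def t_layL)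
  have e2: "(ltr L \<star> idn zs) \<cdot> (chsem Lf sf \<star> idn zs) = (ltr L \<cdot> chsem Lf sf) \<star> idn zs"
    using o1 o3 Cons by (subst inter_t) (simp_all add: c_idl)
  have IH: "lchain (map (addR zs) Lf) (sf @ zs) (lsrc L @ zs)" "chsem (map (addR zs) Lf) (sf @ zs) = chsem Lf sf \<star> idn zs"
    using Cons(1)[of "lsrc L"] Cons(2-4) by auto
  have f: "okL (addR zs L)" "ltgt (addR zs L) = tf @ zs" "lsrc (addR zs L) = lsrc L @ zs"
    using Cons by (auto simp add: okL_def addR_def lsrc_def ltgt_def)
  show ?case using IH e1 e2 f by simp
qed

lemma chsem_addL: "lchain Lf sf tf \<Longrightarrow> set zs \<subseteq> Ob \<Longrightarrow> set sf \<subseteq> Ob \<Longrightarrow>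
   lchain (map (addL zs) Lf) (zs @ sf) (zs @ tf) \<and> chsem (map (addL zs) Lf) (zs @ sf) = idn zs \<star> chsem Lf sf"
proof (induct Lf arbitrary: tf)
  case Nil then show ?case by (simp add: t_idn)
next
  case (Cons L Lf)
  have o1: "ok (chsem Lf sf)" "src (chsem Lf sf) = sf" "tgt (chsem Lf sf) = lsrc L"
    using chsem_ok[of Lf sf "lsrc L"] Cons by auto
  have o3: "ok (ltr L)" "src (ltr L) = lsrc L" using ltr_props[of L] Cons by auto
  have e1: "ltr (addL zs L) = idn zs \<star> ltr L" using Cons
    by (simp add: ltr_def addL_def okL_def t_layR)
  have e2: "(idn zs \<star> ltr L) \<cdot> (idn zs \<star> chsem Lf sf) = idn zs \<star> (ltr L \<cdot> chsem Lf sf)"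
    using o1 o3 Cons by (subst inter_t) (simp_all add: c_idl)
  have IH: "lchain (map (addL zs) Lf) (zs @ sf) (zs @ lsrc L)" "chsem (map (addL zs) Lf) (zs @ sf) = idn zs \<star> chsem Lf sf"
    using Cons(1)[of "lsrc L"] Cons(2-4) by auto
  have f: "okL (addL zs L)" "ltgt (addL zs L) = zs @ tf" "lsrc (addL zs L) = zs @ lsrc L"
    using Cons by (auto simp add: okL_def addL_def lsrc_def ltgt_def)
  show ?case using IH e1 e2 f by simp
qed

lemma wf_dtns: "wf f \<Longrightarrow> wf g \<Longrightarrow> wf (f \<oplus> g) \<and> dtr (f \<oplus> g) = dtr f \<star> dtr g"
proof -
  assume f: "wf f" and g: "wf g"
  obtain Lf sf tf where F: "f = (Lf, sf, tf)" by (cases f) auto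
  obtain Lg sg tg where G: "g = (Lg, sg, tg)" by (cases g) auto
  have cf: "lchain Lf sf tf" "set sf \<subseteq> Ob" "set tf \<subseteq> Ob" using f F by (auto simp: wf_def)
  have cg: "lchain Lg sg tg" "set sg \<subseteq> Ob" "set tg \<subseteq> Ob" using g G by (auto simp: wf_def)
  note A = chsem_addR[OF cf(1) cg(3) cf(2)] and B = chsem_addL[OF cg(1) cf(2) cg(2)]
  have C: "lchain (map (addR tg) Lf @ map (addL sf) Lg) (sf @ sg) (tf @ tg) \<and>
    chsem (map (addR tg) Lf @ map (addL sf) Lg) (sf @ sg) = chsem (map (addR tg) Lf) (sf @ tg) \<cdot> chsem (map (addL sf) Lg) (sf @ sg)"
    using chsem_app[of "map (addR tg) Lf" "sf @ tg" "tf @ tg" "map (addL sf) Lg" "sf @ sg"] A B cf cg by simp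
  have o1: "ok (chsem Lf sf)" "src (chsem Lf sf) = sf" "tgt (chsem Lf sf) = tf" using chsem_ok cf by blast+
  have o2: "ok (chsem Lg sg)" "src (chsem Lg sg) = sg" "tgt (chsem Lg sg) = tg" using chsem_ok cg by blast+
  have "(chsem Lf sf \<star> idn tg) \<cdot> (idn sf \<star> chsem Lg sg) = (chsem Lf sf \<cdot> idn sf) \<star> (idn tg \<cdot> chsem Lg sg)"
    using o1 o2 cf cg by (subst inter_t) simp_all
  also have "\<dots> = chsem Lf sf \<star> chsem Lg sg" using o1 o2 by (simp add: c_idl c_idr)
  finally show ?thesis using C A B cf cg F G by (simp add: wf_def dtr_def dtns_def)
qed

lemma dtr_didn: "dtr (didn xs) = idn xs" and wf_didn: "set xs \<subseteq> Ob \<Longrightarrow> wf (didn xs)"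
  by (simp_all add: dtr_def didn_def wf_def)

lemma dtr_dgen: "ok G \<Longrightarrow> dtr (dgen G) = G" and wf_dgen: "ok G \<Longrightarrow> wf (dgen G)"
  using ok_D[of G] by (simp_all add: dtr_def dgen_def wf_def ltr_def lay_gen c_idr okL_def lsrc_def ltgt_def)

section \<open>Sorting\<close>

definition sw :: "'o list \<times> ('m \<times> 'o list \<times> 'o list) \<times> 'o list \<Rightarrow> 'o list \<times> ('m \<times> 'o list \<times> 'o list) \<times> 'o list \<Rightarrow> bool" where
  "sw a b \<longleftrightarrow> length (fst a) + length (src (fst (snd a))) \<le> length (fst b) \<and>
      \<not> (length (fst b) + length (tgt (fst (snd b))) \<le> length (fst a))"

definition swp1 :: "'o list \<times> ('m \<times> 'o list \<times> 'o list) \<times> 'o list \<Rightarrow> 'o list \<times> ('m \<times> 'o list \<times> 'o list) \<times> 'o list \<Rightarrow> 'o list \<times> ('m \<times> 'o list \<times> 'o list) \<times> 'o list" where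
  "swp1 a b = (fst a @ tgt (fst (snd a)) @ drop (length (fst a) + length (src (fst (snd a)))) (fst b), fst (snd b), snd (snd b))"
definition swp2 :: "'o list \<times> ('m \<times> 'o list \<times> 'o list) \<times> 'o list \<Rightarrow> 'o list \<times> ('m \<times> 'o list \<times> 'o list) \<times> 'o list \<Rightarrow> 'o list \<times> ('m \<times> 'o list \<times> 'o list) \<times> 'o list" where
  "swp2 a b = (fst a, fst (snd a), drop (length (fst a) + length (src (fst (snd a)))) (fst b) @ src (fst (snd b)) @ snd (snd b))"

fun pass where
  "pass (a # b # R) = (if sw a b then swp1 a b # pass (swp2 a b # R) else a # pass (b # R))"
| "pass Ls = Ls"

fun anysw where
  "anysw (a # b # R) = (sw a b \<or> anysw (b # R))"
| "anysw Ls = False"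

fun srt :: "nat \<Rightarrow> ('o list \<times> ('m \<times> 'o list \<times> 'o list) \<times> 'o list) list \<Rightarrow> ('o list \<times> ('m \<times> 'o list \<times> 'o list) \<times> 'o list) list" where
  "srt 0 Ls = Ls"
| "srt (Suc n) Ls = (if anysw Ls then srt n (pass Ls) else Ls)"

lemma srt_num: "srt (numeral k) Ls = (if anysw Ls then srt (pred_numeral k) (pass Ls) else Ls)"
  by (simp add: numeral_eq_Suc)

definition sortd :: "('o list \<times> ('m \<times> 'o list \<times> 'o list) \<times> 'o list) list \<times> 'o list \<times> 'o list \<Rightarrow> ('o list \<times> ('m \<times> 'o list \<times> 'o list) \<times> 'o list) list \<times> 'o list \<times> 'o list" where
  "sortd D = (srt (length (fst D) * length (fst D) + 1) (fst D), snd D)"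

lemma swap_step:
  assumes ch: "lchain (a # b # R) s t" and s: "sw a b"
  shows "lchain (swp1 a b # swp2 a b # R) s t \<and> ltr a \<cdot> ltr b = ltr (swp1 a b) \<cdot> ltr (swp2 a b) \<and> lsrc (swp2 a b) = lsrc b"
proof -
  obtain xs G ys where a: "a = (xs, G, ys)" by (cases a) auto
  obtain xs' H ys' where b: "b = (xs', H, ys')" by (cases b) auto
  define zs where "zs = drop (length xs + length (src G)) xs'"
  have c: "okL a" "ltgt a = t" "okL b" "ltgt b = lsrc a" "lchain R s (lsrc b)" using ch by auto
  have eq: "xs @ src G @ ys = xs' @ tgt H @ ys'" using c(4) a b by (simp add: lsrc_def ltgt_def)
  have le: "length xs + length (src G) \<le> length xs'" using s a b by (simp add: sw_def)
  have sp: "xs' = xs @ src G @ zs" using swap_split[OF eq le] zs_def by simp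
  have ys: "ys = zs @ tgt H @ ys'" using eq sp by simp
  have oks: "ok G" "ok H" "set xs \<subseteq> Ob" "set ys \<subseteq> Ob" "set xs' \<subseteq> Ob" "set ys' \<subseteq> Ob"
    using c a b by (auto simp: okL_def)
  have zo: "set zs \<subseteq> Ob" using oks(5) sp by auto
  have sw1: "swp1 a b = (xs @ tgt G @ zs, H, ys')" using a b zs_def by (simp add: swp1_def)
  have sw2: "swp2 a b = (xs, G, zs @ src H @ ys')" using a b zs_def by (simp add: swp2_def)
  have t: "t = xs @ tgt G @ zs @ tgt H @ ys'" using c(2) a ys by (simp add: ltgt_def)
  have lb: "lsrc b = xs @ src G @ zs @ src H @ ys'" using b sp by (simp add: lsrc_def)
  have "okL (swp1 a b)" "okL (swp2 a b)" using oks zo ok_D[of G] ok_D[of H] by (simp_all add: sw1 sw2 okL_def)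
  moreover have "ltgt (swp1 a b) = t" "lsrc (swp1 a b) = ltgt (swp2 a b)" "lsrc (swp2 a b) = lsrc b"
    by (simp_all only: sw1 sw2) (simp_all add: lsrc_def ltgt_def t b sp)
  ultimately have "lchain (swp1 a b # swp2 a b # R) s t" "lsrc (swp2 a b) = lsrc b" using c(5) by simp_all
  moreover have "ltr a \<cdot> ltr b = ltr (swp1 a b) \<cdot> ltr (swp2 a b)"
    unfolding a b ltr_def using swap0[OF oks eq le] zs_def by (simp add: swp1_def swp2_def)
  ultimately show ?thesis by blast
qed

lemma pass_ok: "lchain Ls s t \<Longrightarrow> set s \<subseteq> Ob \<Longrightarrow> lchain (pass Ls) s t \<and> chsem (pass Ls) s = chsem Ls s"
proof (induct Ls arbitrary: t rule: pass.induct)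
  case (1 a b R)
  show ?case
  proof (cases "sw a b")
    case True
    note st = swap_step[OF 1(3) True]
    have c2: "lchain (swp2 a b # R) s (lsrc (swp1 a b))" using st by fastforce
    have IH: "lchain (pass (swp2 a b # R)) s (lsrc (swp1 a b)) \<and> chsem (pass (swp2 a b # R)) s = chsem (swp2 a b # R) s"
      using 1(1)[OF True c2 1(4)] .
    have okR: "ok (chsem R s)" "tgt (chsem R s) = lsrc b" "src (chsem R s) = s"
      using chsem_ok[of R s "lsrc b"] 1 by auto
    have la: "okL a" "okL b" "ltgt b = lsrc a" using 1(3) by auto
    have l1: "okL (swp1 a b)" "okL (swp2 a b)" "lsrc (swp1 a b) = ltgt (swp2 a b)" "lsrc (swp2 a b) = lsrc b"
      using st by auto
    have "chsem (pass (a # b # R)) s = ltr (swp1 a b) \<cdot> (ltr (swp2 a b) \<cdot> chsem R s)"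
      using True IH by simp
    also have "\<dots> = (ltr (swp1 a b) \<cdot> ltr (swp2 a b)) \<cdot> chsem R s"
      using ltr_props[OF l1(1)] ltr_props[OF l1(2)] l1 okR by (simp add: c_assoc)
    also have "\<dots> = (ltr a \<cdot> ltr b) \<cdot> chsem R s" using st by simp
    also have "\<dots> = ltr a \<cdot> (ltr b \<cdot> chsem R s)"
      using ltr_props[OF la(1)] ltr_props[OF la(2)] la okR by (simp add: c_assoc)
    finally show ?thesis using True IH st by simp
  next
    case False
    have c2: "lchain (b # R) s (lsrc a)" using 1(3) by simp
    have IH: "lchain (pass (b # R)) s (lsrc a) \<and> chsem (pass (b # R)) s = chsem (b # R) s"
      using 1(2)[OF False c2 1(4)] .
    show ?thesis using False IH 1(3) by simp
  qed
qed simp_all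

lemma srt_ok: "lchain Ls s t \<Longrightarrow> set s \<subseteq> Ob \<Longrightarrow> lchain (srt n Ls) s t \<and> chsem (srt n Ls) s = chsem Ls s"
proof (induct n arbitrary: Ls)
  case 0 then show ?case by simp
next
  case (Suc n) then show ?case using pass_ok[of Ls s t] by auto
qed

lemma sortd_ok: "wf D \<Longrightarrow> wf (sortd D) \<and> dtr (sortd D) = dtr D"
  unfolding wf_def dtr_def sortd_def using srt_ok by (metis prod.collapse fst_conv snd_conv)

lemma nfeq: "wf D1 \<Longrightarrow> wf D2 \<Longrightarrow> sortd D1 = sortd D2 \<Longrightarrow> dtr D1 = dtr D2"
  using sortd_ok by metis

definition deq where "deq A B \<longleftrightarrow> dtr A = dtr B \<and> wf A \<and> wf B"

lemma deq_sym: "deq A B \<Longrightarrow> deq B A" by (auto simp: deq_def)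

lemma dtr_cmp: "wf f \<Longrightarrow> wf g \<Longrightarrow> fst (snd g) = snd (snd f) \<Longrightarrow> dtr (g \<diamond> f) = dtr g \<cdot> dtr f"
  using wf_dcmp by blast
lemma dtr_tns: "wf f \<Longrightarrow> wf g \<Longrightarrow> dtr (f \<oplus> g) = dtr f \<star> dtr g"
  using wf_dtns by blast
lemma wf_cmp: "wf f \<Longrightarrow> wf g \<Longrightarrow> fst (snd g) = snd (snd f) \<Longrightarrow> wf (g \<diamond> f)"
  using wf_dcmp by blast
lemma wf_tns: "wf f \<Longrightarrow> wf g \<Longrightarrow> wf (f \<oplus> g)"
  using wf_dtns by blast
lemma dst_simps: "fst (snd (g \<diamond> f)) = fst (snd f)" "snd (snd (g \<diamond> f)) = snd (snd g)"
  "fst (snd (f \<oplus> g)) = fst (snd f) @ fst (snd g)" "snd (snd (f \<oplus> g)) = snd (snd f) @ snd (snd g)"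
  "fst (snd (didn xs)) = xs" "snd (snd (didn xs)) = xs"
  "fst (snd (dgen G)) = src G" "snd (snd (dgen G)) = tgt G"
  by (simp_all add: dcmp_def dtns_def didn_def dgen_def)

lemma stepr:
  assumes ax: "deq A B" and wX: "wf X" and wY: "wf Y" and sets: "set xs \<subseteq> Ob" "set ys \<subseteq> Ob"
    and tX: "fst (snd X) = xs @ snd (snd A) @ ys" and tY: "snd (snd Y) = xs @ fst (snd A) @ ys"
    and wP: "wf P" and nP: "sortd P = sortd (X \<diamond> (didn xs \<oplus> A \<oplus> didn ys) \<diamond> Y)"
  shows "dtr P = dtr (X \<diamond> (didn xs \<oplus> B \<oplus> didn ys) \<diamond> Y)"
proof -
  have a: "dtr A = dtr B" "wf A" "wf B" using ax by (auto simp: deq_def)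
  have sAB: "fst (snd A) = fst (snd B)" "snd (snd A) = snd (snd B)"
    using dtr_ok[OF a(2)] dtr_ok[OF a(3)] a(1) by metis+
  have wi: "wf (didn xs)" "wf (didn ys)" using sets by (simp_all add: wf_didn)
  have wA: "wf (didn xs \<oplus> A \<oplus> didn ys)" "wf (didn xs \<oplus> B \<oplus> didn ys)"
    using wi a by (simp_all add: wf_tns)
  have eq: "dtr (didn xs \<oplus> A \<oplus> didn ys) = dtr (didn xs \<oplus> B \<oplus> didn ys)"
    using wi a by (simp add: dtr_tns wf_tns)
  have W1: "wf (X \<diamond> (didn xs \<oplus> A \<oplus> didn ys) \<diamond> Y)" "wf (X \<diamond> (didn xs \<oplus> B \<oplus> didn ys) \<diamond> Y)"
    using wA wX wY tX tY sAB by (simp_all add: wf_cmp dst_simps)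
  have "dtr (X \<diamond> (didn xs \<oplus> A \<oplus> didn ys) \<diamond> Y) = dtr (X \<diamond> (didn xs \<oplus> B \<oplus> didn ys) \<diamond> Y)"
    using wA wX wY tX tY sAB eq by (simp add: dtr_cmp wf_cmp dst_simps)
  moreover have "dtr P = dtr (X \<diamond> (didn xs \<oplus> A \<oplus> didn ys) \<diamond> Y)"
    by (rule nfeq[OF wP W1(1) nP])
  ultimately show ?thesis by simp
qed

fun dbrA where
  "dbrA x [] = didn [x]"
| "dbrA x (y # ys) = (didn [y] \<oplus> dbrA x ys) \<diamond> (dgen (c x y) \<oplus> didn ys)"
fun dbrl where
  "dbrl [] ys = didn ys"
| "dbrl (x # xs) ys = (dbrA x ys \<oplus> didn xs) \<diamond> (didn [x] \<oplus> dbrl xs ys)"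

lemma dbrA_ok: "x \<in> Ob \<Longrightarrow> set ys \<subseteq> Ob \<Longrightarrow> wf (dbrA x ys) \<and> dtr (dbrA x ys) = brA x ys \<and>
   fst (snd (dbrA x ys)) = x # ys \<and> snd (snd (dbrA x ys)) = ys @ [x]"
proof (induct ys)
  case Nil then show ?case by (simp add: wf_didn dtr_didn dst_simps)
next
  case (Cons y ys)
  then show ?case
    by (simp add: wf_didn dtr_didn dst_simps wf_tns wf_cmp dtr_tns dtr_cmp wf_dgen dtr_dgen)
qed

lemma dbrl_ok: "set xs \<subseteq> Ob \<Longrightarrow> set ys \<subseteq> Ob \<Longrightarrow> wf (dbrl xs ys) \<and> dtr (dbrl xs ys) = brl xs ys \<and>
   fst (snd (dbrl xs ys)) = xs @ ys \<and> snd (snd (dbrl xs ys)) = ys @ xs"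
proof (induct xs)
  case Nil then show ?case by (simp add: wf_didn dtr_didn dst_simps)
next
  case (Cons x xs)
  then show ?case using dbrA_ok[of x ys]
    by (simp add: wf_didn dtr_didn dst_simps wf_tns wf_cmp dtr_tns dtr_cmp)
qed

lemma dnat: "wf F \<Longrightarrow> wf G \<Longrightarrow>
  deq (dbrl (snd (snd F)) (snd (snd G)) \<diamond> (F \<oplus> G)) ((G \<oplus> F) \<diamond> dbrl (fst (snd F)) (fst (snd G)))"
proof -
  assume F: "wf F" and G: "wf G"
  note oF = dtr_ok[OF F] and oG = dtr_ok[OF G]
  note b1 = dbrl_ok[of "snd (snd F)" "snd (snd G)"] and b2 = dbrl_ok[of "fst (snd F)" "fst (snd G)"]
  have s: "set (snd (snd F)) \<subseteq> Ob" "set (snd (snd G)) \<subseteq> Ob" "set (fst (snd F)) \<subseteq> Ob" "set (fst (snd G)) \<subseteq> Ob"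
    using F G by (auto simp: wf_def)
  show ?thesis unfolding deq_def
    using natl[of "dtr F" "dtr G"] oF oG b1 b2 s F G
    by (simp add: wf_tns wf_cmp dtr_tns dtr_cmp dst_simps)
qed

lemmas ev = dcmp_def dtns_def didn_def dgen_def addR_def addL_def wf_def okL_def lsrc_def ltgt_def
  sortd_def srt_num pass.simps anysw.simps sw_def swp1_def swp2_def dbrA.simps dbrl.simps

lemma deq_nf: "deq A B \<Longrightarrow> wf A' \<Longrightarrow> wf B' \<Longrightarrow> sortd A = sortd A' \<Longrightarrow> sortd B = sortd B' \<Longrightarrow> deq A' B'"
  unfolding deq_def using nfeq by metis

lemma deq_trans: "deq A B \<Longrightarrow> deq B E \<Longrightarrow> deq A E" by (auto simp: deq_def)

end

locale wbx = bsm C for C :: "('o,'m) bmcat" +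
  fixes X :: 'o and \<eta> \<mu> \<epsilon> \<delta> :: 'm
  assumes wb: "weak_bialgebra C X \<eta> \<mu> \<epsilon> \<delta>"
begin

abbreviation "I \<equiv> didn [X]"
abbreviation "u \<equiv> dgen (\<eta>, [], [X])"
abbreviation "m \<equiv> dgen (\<mu>, [X,X], [X])"
abbreviation "e \<equiv> dgen (\<epsilon>, [X], [])"
abbreviation "d \<equiv> dgen (\<delta>, [X], [X,X])"
abbreviation "cc \<equiv> dgen (c X X)"
abbreviation "cci \<equiv> dgen (ci X X)"

lemma X_Ob[simp]: "X \<in> Ob"
  using wb by (simp add: weak_bialgebra_def is_algebra_def)

lemma ok_gens[simp]: "ok (\<eta>, [], [X])" "ok (\<mu>, [X,X], [X])" "ok (\<epsilon>, [X], [])" "ok (\<delta>, [X], [X,X])"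
  using wb by (auto simp add: weak_bialgebra_def is_algebra_def is_coalgebra_def ok_def hom_iff obj_Cons)

lemmas wbd = wb[unfolded weak_bialgebra_def is_algebra_def is_coalgebra_def]

lemmas hom = dtr_cmp dtr_tns dtr_didn dtr_dgen wf_cmp wf_tns wf_didn wf_dgen dst_simps

lemma m_assoc: "deq (m \<diamond> (m \<oplus> I)) (m \<diamond> (I \<oplus> m))"
  and m_unitL: "deq (m \<diamond> (u \<oplus> I)) I" and m_unitR: "deq (m \<diamond> (I \<oplus> u)) I"
  and d_coassoc: "deq ((d \<oplus> I) \<diamond> d) ((I \<oplus> d) \<diamond> d)"
  and d_counitL: "deq ((e \<oplus> I) \<diamond> d) I" and d_counitR: "deq ((I \<oplus> e) \<diamond> d) I"
  and dm: "deq (d \<diamond> m) ((m \<oplus> m) \<diamond> ((I \<oplus> cc) \<oplus> I) \<diamond> (d \<oplus> d))"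
  and E1: "deq (e \<diamond> (m \<diamond> (m \<oplus> I))) (((e \<diamond> m) \<oplus> (e \<diamond> m)) \<diamond> ((I \<oplus> d) \<oplus> I))"
  and E2: "deq (e \<diamond> (m \<diamond> (m \<oplus> I))) (((e \<diamond> m) \<oplus> (e \<diamond> m)) \<diamond> ((I \<oplus> (cci \<diamond> d)) \<oplus> I))"
  and U1: "deq ((d \<oplus> I) \<diamond> (d \<diamond> u)) (((I \<oplus> m) \<oplus> I) \<diamond> ((d \<diamond> u) \<oplus> (d \<diamond> u)))"
  and U2: "deq ((d \<oplus> I) \<diamond> (d \<diamond> u)) (((I \<oplus> (m \<diamond> cci)) \<oplus> I) \<diamond> ((d \<diamond> u) \<oplus> (d \<diamond> u)))"
  unfolding deq_def
  by (simp add: hom; rule tr_eq; simp only: st_simps c_simps obj_simps(2)[OF X_Ob] fst_conv snd_conv append.simps;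
      use wbd in blast)+


end



context wbx begin

abbreviation "p \<equiv> e \<diamond> m"
abbreviation "du \<equiv> d \<diamond> u"

lemma c_ci: "deq (cc \<diamond> cci) (didn [X,X])"
  unfolding deq_def by (simp add: hom, rule tr_eq, simp_all add: brinv obj_Cons)
lemma ci_c: "deq (cci \<diamond> cc) (didn [X,X])"
  unfolding deq_def by (simp add: hom, rule tr_eq, simp_all add: brinv obj_Cons)

lemma nat_m_L: "deq (cc \<diamond> (I \<oplus> m)) ((m \<oplus> I) \<diamond> (I \<oplus> cc) \<diamond> (cc \<oplus> I))"
  by (rule deq_nf[OF dnat[of I m]]) (simp_all add: ev)
lemma nat_m_R: "deq (cc \<diamond> (m \<oplus> I)) ((I \<oplus> m) \<diamond> (cc \<oplus> I) \<diamond> (I \<oplus> cc))"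
  by (rule deq_nf[OF dnat[of m I]]) (simp_all add: ev)
lemma nat_d_L: "deq ((d \<oplus> I) \<diamond> cc) ((I \<oplus> cc) \<diamond> (cc \<oplus> I) \<diamond> (I \<oplus> d))"
  by (rule deq_nf[OF deq_sym[OF dnat[of I d]]]) (simp_all add: ev)
lemma nat_d_R: "deq ((I \<oplus> d) \<diamond> cc) ((cc \<oplus> I) \<diamond> (I \<oplus> cc) \<diamond> (d \<oplus> I))"
  by (rule deq_nf[OF deq_sym[OF dnat[of d I]]]) (simp_all add: ev)
lemma nat_p_L: "deq ((p \<oplus> I) \<diamond> (I \<oplus> cc) \<diamond> (cc \<oplus> I)) (I \<oplus> p)"
  by (rule deq_nf[OF deq_sym[OF dnat[of I p]]]) (simp_all add: ev)
lemma nat_p_R: "deq ((I \<oplus> p) \<diamond> (cc \<oplus> I) \<diamond> (I \<oplus> cc)) (p \<oplus> I)"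
  by (rule deq_nf[OF deq_sym[OF dnat[of p I]]]) (simp_all add: ev)
lemma nat_ci: "deq ((I \<oplus> cci) \<diamond> (cc \<oplus> I) \<diamond> (I \<oplus> cc)) ((cc \<oplus> I) \<diamond> (I \<oplus> cc) \<diamond> (cci \<oplus> I))"
  by (rule deq_nf[OF deq_sym[OF dnat[of cci I]]]) (simp_all add: ev)

end

locale wha = wbx C X \<eta> \<mu> \<epsilon> \<delta> for C :: "('o,'m) bmcat" and X \<eta> \<mu> \<epsilon> \<delta> +
  fixes lam :: 'm
  assumes wh: "weak_hopf_algebra C X \<eta> \<mu> \<epsilon> \<delta> lam"
begin

abbreviation "S \<equiv> dgen (lam, [X], [X])"
abbreviation "PLd \<equiv> (p \<oplus> I) \<diamond> (I \<oplus> cc) \<diamond> (du \<oplus> I)"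
abbreviation "PRd \<equiv> (I \<oplus> p) \<diamond> (cc \<oplus> I) \<diamond> (I \<oplus> du)"
abbreviation "PLg \<equiv> dgen (PiL C X \<eta> \<mu> \<epsilon> \<delta>, [X], [X])"
abbreviation "PRg \<equiv> dgen (PiR C X \<eta> \<mu> \<epsilon> \<delta>, [X], [X])"
abbreviation cv where "cv h k \<equiv> m \<diamond> (h \<oplus> k) \<diamond> d"

lemma ok_S[simp]: "ok (lam, [X], [X])"
  using wh by (simp add: weak_hopf_algebra_def hom_iff ok_def)

lemma dtr_PLd: "dtr PLd = (PiL C X \<eta> \<mu> \<epsilon> \<delta>, [X], [X])" and wf_PLd: "wf PLd"
  by (simp_all add: hom, rule tr_eq, simp_all add: PiL_def)
lemma dtr_PRd: "dtr PRd = (PiR C X \<eta> \<mu> \<epsilon> \<delta>, [X], [X])" and wf_PRd: "wf PRd"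
  by (simp_all add: hom, rule tr_eq, simp_all add: PiR_def)

lemma ok_PL[simp]: "ok (PiL C X \<eta> \<mu> \<epsilon> \<delta>, [X], [X])"
  using dtr_ok[OF wf_PLd] dtr_PLd by simp
lemma ok_PR[simp]: "ok (PiR C X \<eta> \<mu> \<epsilon> \<delta>, [X], [X])"
  using dtr_ok[OF wf_PRd] dtr_PRd by simp

lemma PL_eq: "deq PLg PLd" unfolding deq_def using dtr_PLd wf_PLd by (simp add: hom)
lemma PR_eq: "deq PRg PRd" unfolding deq_def using dtr_PRd wf_PRd by (simp add: hom)

lemmas whd = wh[unfolded weak_hopf_algebra_def conv_def]

lemma ax_PL: "deq (cv I S) PLg" and ax_PR: "deq (cv S I) PRg"
  unfolding deq_def by (simp_all add: hom; rule tr_eq; use whd in simp)+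

lemma ax_S: "deq (cv PRg S) S"
proof -
  have 2: "cComp C \<mu> (cComp C (cTm C (PiR C X \<eta> \<mu> \<epsilon> \<delta>) lam) \<delta>) = lam"
    using whd by metis
  show ?thesis unfolding deq_def by (simp add: hom, rule tr_eq, simp_all add: 2)
qed


abbreviation "I0 \<equiv> didn ([]::'o list)"
abbreviation "I2 \<equiv> didn [X,X]"
abbreviation "I3 \<equiv> didn [X,X,X]"

lemma b3: "deq (PLg \<diamond> m) ((PLg \<oplus> p) \<diamond> (d \<oplus> I))"
proof -
  have "dtr (PLg \<diamond> m) = dtr (I \<diamond> (I0 \<oplus> PLd \<oplus> I0) \<diamond> m)"
    by (rule stepr[OF PL_eq]) (simp_all add: ev)
  also have "\<dots> = dtr ((p \<oplus> I) \<diamond> (I \<oplus> ((m \<oplus> I) \<diamond> (I \<oplus> cc) \<diamond> (cc \<oplus> I)) \<oplus> I0) \<diamond> (du \<oplus> I2))"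
    by (rule stepr[OF nat_m_L]) (simp_all add: ev)
  also have "\<dots> = dtr ((e \<oplus> I) \<diamond> (I0 \<oplus> (m \<diamond> (m \<oplus> I)) \<oplus> I) \<diamond> (I \<oplus> ((I \<oplus> cc) \<diamond> (cc \<oplus> I))) \<diamond> (du \<oplus> I2))"
    by (rule stepr[OF deq_sym[OF m_assoc]]) (simp_all add: ev)
  also have "\<dots> = dtr (I \<diamond> (I0 \<oplus> (((e \<diamond> m) \<oplus> (e \<diamond> m)) \<diamond> ((I \<oplus> d) \<oplus> I)) \<oplus> I) \<diamond> (I \<oplus> ((I \<oplus> cc) \<diamond> (cc \<oplus> I))) \<diamond> (du \<oplus> I2))"
    by (rule stepr[OF E1]) (simp_all add: ev)
  also have "\<dots> = dtr (((p \<oplus> p \<oplus> I) \<diamond> (I3 \<oplus> cc)) \<diamond> (I \<oplus> ((I \<oplus> cc) \<diamond> (cc \<oplus> I) \<diamond> (I \<oplus> d)) \<oplus> I) \<diamond> (du \<oplus> I2))"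
    by (rule stepr[OF nat_d_L]) (simp_all add: ev)
  also have "\<dots> = dtr ((p \<oplus> I) \<diamond> (I2 \<oplus> (I \<oplus> p) \<oplus> I0) \<diamond> (I \<oplus> cc \<oplus> I2) \<diamond> (I2 \<oplus> d \<oplus> I) \<diamond> (du \<oplus> I2))"
    by (rule stepr[OF nat_p_L]) (simp_all add: ev)
  also have "\<dots> = dtr ((I \<oplus> p) \<diamond> (I0 \<oplus> PLg \<oplus> I2) \<diamond> (d \<oplus> I))"
    by (rule stepr[OF deq_sym[OF PL_eq]]) (simp_all add: ev)
  also have "\<dots> = dtr ((PLg \<oplus> p) \<diamond> (d \<oplus> I))"
    by (rule nfeq) (simp_all add: ev)
  finally show ?thesis unfolding deq_def by (simp add: ev)
qed


abbreviation "I4 \<equiv> didn [X,X,X,X]"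

lemma Nci: "deq ((I \<oplus> p) \<diamond> (cc \<oplus> I)) ((p \<oplus> I) \<diamond> (I \<oplus> cci))"
proof -
  have "dtr ((p \<oplus> I) \<diamond> (I \<oplus> cci)) = dtr (I \<diamond> (I0 \<oplus> ((I \<oplus> p) \<diamond> (cc \<oplus> I) \<diamond> (I \<oplus> cc)) \<oplus> I0) \<diamond> (I \<oplus> cci))"
    by (rule stepr[OF deq_sym[OF nat_p_R]]) (simp_all add: ev)
  also have "\<dots> = dtr (((I \<oplus> p) \<diamond> (cc \<oplus> I)) \<diamond> (I \<oplus> I2 \<oplus> I0) \<diamond> I3)"
    by (rule stepr[OF c_ci]) (simp_all add: ev)
  also have "\<dots> = dtr ((I \<oplus> p) \<diamond> (cc \<oplus> I))"
    by (rule nfeq) (simp_all add: ev)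
  finally show ?thesis unfolding deq_def by (simp add: ev)
qed

lemma b4: "deq (m \<diamond> (PRg \<oplus> I)) ((I \<oplus> p) \<diamond> (cc \<oplus> I) \<diamond> (I \<oplus> d))"
proof -
  have L: "dtr (m \<diamond> (PRg \<oplus> I)) = dtr (((I \<oplus> e) \<diamond> (m \<oplus> m) \<diamond> (I \<oplus> cc \<oplus> I) \<diamond> (I2 \<oplus> d)) \<diamond>
      (I \<oplus> ((p \<oplus> I) \<diamond> (I \<oplus> cci)) \<oplus> I) \<diamond> (cc \<oplus> I3) \<diamond> (I \<oplus> d \<oplus> I2) \<diamond> (I \<oplus> du \<oplus> I))"
  proof -
    have "dtr (m \<diamond> (PRg \<oplus> I)) = dtr (m \<diamond> (I0 \<oplus> PRd \<oplus> I) \<diamond> I2)"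
      by (rule stepr[OF PR_eq]) (simp_all add: ev)
    also have "\<dots> = dtr (I \<diamond> (I0 \<oplus> ((I \<oplus> e) \<diamond> d) \<oplus> I0) \<diamond> (m \<diamond> (PRd \<oplus> I)))"
      by (rule stepr[OF deq_sym[OF d_counitR]]) (simp_all add: ev)
    also have "\<dots> = dtr ((I \<oplus> e) \<diamond> (I0 \<oplus> ((m \<oplus> m) \<diamond> ((I \<oplus> cc) \<oplus> I) \<diamond> (d \<oplus> d)) \<oplus> I0) \<diamond> (PRd \<oplus> I))"
      by (rule stepr[OF dm]) (simp_all add: ev)
    also have "\<dots> = dtr (((I \<oplus> e) \<diamond> (m \<oplus> m) \<diamond> (I \<oplus> cc \<oplus> I) \<diamond> (I2 \<oplus> d) \<diamond> (I2 \<oplus> p \<oplus> I)) \<diamond>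
        (I0 \<oplus> ((I \<oplus> cc) \<diamond> (cc \<oplus> I) \<diamond> (I \<oplus> d)) \<oplus> I2) \<diamond> (I \<oplus> du \<oplus> I))"
      by (rule stepr[OF nat_d_L]) (simp_all add: ev)
    also have "\<dots> = dtr (((I \<oplus> e) \<diamond> (m \<oplus> m) \<diamond> (I \<oplus> cc \<oplus> I) \<diamond> (I2 \<oplus> d)) \<diamond>
      (I \<oplus> ((p \<oplus> I) \<diamond> (I \<oplus> cci)) \<oplus> I) \<diamond> (cc \<oplus> I3) \<diamond> (I \<oplus> d \<oplus> I2) \<diamond> (I \<oplus> du \<oplus> I))"
      by (rule stepr[OF Nci]) (simp_all add: ev)
    finally show ?thesis .
  qed
  have R: "dtr ((I \<oplus> p) \<diamond> (cc \<oplus> I) \<diamond> (I \<oplus> d)) = dtr (((I \<oplus> p) \<diamond> (m \<oplus> I2)) \<diamond> (I \<oplus> (p \<oplus> I) \<oplus> I2) \<diamond>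
      (cc \<oplus> I4) \<diamond> (I3 \<oplus> cc \<oplus> I) \<diamond> (I2 \<oplus> cci \<oplus> I2) \<diamond> (I4 \<oplus> d) \<diamond> (I \<oplus> ((d \<oplus> I) \<diamond> d) \<oplus> I) \<diamond> (I \<oplus> u \<oplus> I))"
  proof -
    have "dtr ((I \<oplus> p) \<diamond> (cc \<oplus> I) \<diamond> (I \<oplus> d)) = dtr (((I \<oplus> p) \<diamond> (cc \<oplus> I) \<diamond> (I \<oplus> d)) \<diamond> (I \<oplus> (m \<diamond> (u \<oplus> I)) \<oplus> I0) \<diamond> I2)"
      by (rule stepr[OF deq_sym[OF m_unitL]]) (simp_all add: ev)
    also have "\<dots> = dtr (((I \<oplus> p) \<diamond> (cc \<oplus> I)) \<diamond> (I \<oplus> ((m \<oplus> m) \<diamond> ((I \<oplus> cc) \<oplus> I) \<diamond> (d \<oplus> d)) \<oplus> I0) \<diamond> (I \<oplus> u \<oplus> I))"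
      by (rule stepr[OF dm]) (simp_all add: ev)
    also have "\<dots> = dtr ((I \<oplus> p) \<diamond> (I0 \<oplus> ((m \<oplus> I) \<diamond> (I \<oplus> cc) \<diamond> (cc \<oplus> I)) \<oplus> I) \<diamond> (I3 \<oplus> m) \<diamond>
        (I \<oplus> ((I \<oplus> cc \<oplus> I) \<diamond> (d \<oplus> d))) \<diamond> (I \<oplus> u \<oplus> I))"
      by (rule stepr[OF nat_m_L]) (simp_all add: ev)
    also have "\<dots> = dtr ((I \<oplus> e) \<diamond> (I \<oplus> (m \<diamond> (m \<oplus> I)) \<oplus> I0) \<diamond> (m \<oplus> I3) \<diamond> (I \<oplus> cc \<oplus> I2) \<diamond> (cc \<oplus> I3) \<diamond>
        (I \<oplus> ((I \<oplus> cc \<oplus> I) \<diamond> (d \<oplus> d))) \<diamond> (I \<oplus> u \<oplus> I))"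
      by (rule stepr[OF deq_sym[OF m_assoc]]) (simp_all add: ev)
    also have "\<dots> = dtr (I \<diamond> (I \<oplus> (((e \<diamond> m) \<oplus> (e \<diamond> m)) \<diamond> ((I \<oplus> (cci \<diamond> d)) \<oplus> I)) \<oplus> I0) \<diamond> (m \<oplus> I3) \<diamond> (I \<oplus> cc \<oplus> I2) \<diamond> (cc \<oplus> I3) \<diamond>
        (I \<oplus> ((I \<oplus> cc \<oplus> I) \<diamond> (d \<oplus> d))) \<diamond> (I \<oplus> u \<oplus> I))"
      by (rule stepr[OF E2]) (simp_all add: ev)
    also have "\<dots> = dtr (((I \<oplus> p \<oplus> p) \<diamond> (I2 \<oplus> cci \<oplus> I) \<diamond> (m \<oplus> I4) \<diamond> (I \<oplus> cc \<oplus> I3) \<diamond> (cc \<oplus> I4)) \<diamond>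
        (I2 \<oplus> ((cc \<oplus> I) \<diamond> (I \<oplus> cc) \<diamond> (d \<oplus> I)) \<oplus> I) \<diamond> (I \<oplus> d \<oplus> d) \<diamond> (I \<oplus> u \<oplus> I))"
      by (rule stepr[OF nat_d_R]) (simp_all add: ev)
    also have "\<dots> = dtr (((I \<oplus> p \<oplus> p) \<diamond> (I2 \<oplus> cci \<oplus> I) \<diamond> (m \<oplus> I4) \<diamond> (I \<oplus> cc \<oplus> I3) \<diamond> (cc \<oplus> I4) \<diamond>
        (I2 \<oplus> ((cc \<oplus> I) \<diamond> (I \<oplus> cc)) \<oplus> I) \<diamond> (I4 \<oplus> d)) \<diamond> (I \<oplus> ((d \<oplus> I) \<diamond> d) \<oplus> I) \<diamond> (I \<oplus> u \<oplus> I))"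
      by (rule stepr[OF deq_sym[OF d_coassoc]]) (simp_all add: ev)
    also have "\<dots> = dtr (((I \<oplus> p \<oplus> p) \<diamond> (m \<oplus> I4) \<diamond> (I \<oplus> cc \<oplus> I3) \<diamond> (cc \<oplus> I4)) \<diamond>
        (I2 \<oplus> ((cc \<oplus> I) \<diamond> (I \<oplus> cc) \<diamond> (cci \<oplus> I)) \<oplus> I) \<diamond> (I4 \<oplus> d) \<diamond> (I \<oplus> ((d \<oplus> I) \<diamond> d) \<oplus> I) \<diamond> (I \<oplus> u \<oplus> I))"
      by (rule stepr[OF nat_ci]) (simp_all add: ev)
    also have "\<dots> = dtr (((I \<oplus> p) \<diamond> (m \<oplus> I2)) \<diamond> (I \<oplus> (p \<oplus> I) \<oplus> I2) \<diamond>
      (cc \<oplus> I4) \<diamond> (I3 \<oplus> cc \<oplus> I) \<diamond> (I2 \<oplus> cci \<oplus> I2) \<diamond> (I4 \<oplus> d) \<diamond> (I \<oplus> ((d \<oplus> I) \<diamond> d) \<oplus> I) \<diamond> (I \<oplus> u \<oplus> I))"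
      by (rule stepr[OF nat_p_R]) (simp_all add: ev)
    finally show ?thesis .
  qed
  have M: "dtr (((I \<oplus> e) \<diamond> (m \<oplus> m) \<diamond> (I \<oplus> cc \<oplus> I) \<diamond> (I2 \<oplus> d)) \<diamond>
      (I \<oplus> ((p \<oplus> I) \<diamond> (I \<oplus> cci)) \<oplus> I) \<diamond> (cc \<oplus> I3) \<diamond> (I \<oplus> d \<oplus> I2) \<diamond> (I \<oplus> du \<oplus> I)) =
    dtr (((I \<oplus> p) \<diamond> (m \<oplus> I2)) \<diamond> (I \<oplus> (p \<oplus> I) \<oplus> I2) \<diamond>
      (cc \<oplus> I4) \<diamond> (I3 \<oplus> cc \<oplus> I) \<diamond> (I2 \<oplus> cci \<oplus> I2) \<diamond> (I4 \<oplus> d) \<diamond> (I \<oplus> ((d \<oplus> I) \<diamond> d) \<oplus> I) \<diamond> (I \<oplus> u \<oplus> I))"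
    by (rule nfeq) (simp_all add: ev)
  show ?thesis unfolding deq_def using L R M by (simp add: ev)
qed


lemma nat_e_R: "deq ((I \<oplus> e) \<diamond> cc) (e \<oplus> I)"
  by (rule deq_nf[OF deq_sym[OF dnat[of e I]]]) (simp_all add: ev)

lemma b2: "deq (e \<diamond> PLg) e"
proof -
  have "dtr (e \<diamond> PLg) = dtr (e \<diamond> (I0 \<oplus> PLd \<oplus> I0) \<diamond> I)"
    by (rule stepr[OF PL_eq]) (simp_all add: ev)
  also have "\<dots> = dtr (p \<diamond> (I \<oplus> (e \<oplus> I) \<oplus> I0) \<diamond> (du \<oplus> I))"
    by (rule stepr[OF nat_e_R]) (simp_all add: ev)
  also have "\<dots> = dtr (p \<diamond> (I0 \<oplus> I \<oplus> I) \<diamond> (u \<oplus> I))"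
    by (rule stepr[OF d_counitR]) (simp_all add: ev)
  also have "\<dots> = dtr (e \<diamond> (I0 \<oplus> I \<oplus> I0) \<diamond> I)"
    by (rule stepr[OF m_unitL]) (simp_all add: ev)
  also have "\<dots> = dtr e"
    by (rule nfeq) (simp_all add: ev)
  finally show ?thesis unfolding deq_def by (simp add: ev)
qed

lemma S_PL: "deq (cv S PLg) S"
proof -
  have "dtr (cv S PLg) = dtr ((m \<diamond> (S \<oplus> I)) \<diamond> (I \<oplus> (m \<diamond> (I \<oplus> S) \<diamond> d) \<oplus> I0) \<diamond> d)"
    by (rule stepr[OF deq_sym[OF ax_PL]]) (simp_all add: ev)
  also have "\<dots> = dtr (I \<diamond> (I0 \<oplus> (m \<diamond> (m \<oplus> I)) \<oplus> I0) \<diamond> (S \<oplus> I \<oplus> S) \<diamond> (I \<oplus> d) \<diamond> d)"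
    by (rule stepr[OF deq_sym[OF m_assoc]]) (simp_all add: ev)
  also have "\<dots> = dtr ((m \<diamond> (m \<oplus> I) \<diamond> (S \<oplus> I \<oplus> S)) \<diamond> (I0 \<oplus> ((d \<oplus> I) \<diamond> d) \<oplus> I0) \<diamond> I)"
    by (rule stepr[OF deq_sym[OF d_coassoc]]) (simp_all add: ev)
  also have "\<dots> = dtr ((m \<diamond> (I \<oplus> S)) \<diamond> (I0 \<oplus> PRg \<oplus> I) \<diamond> d)"
    by (rule stepr[OF ax_PR]) (simp_all add: ev)
  also have "\<dots> = dtr (I \<diamond> (I0 \<oplus> S \<oplus> I0) \<diamond> I)"
    by (rule stepr[OF ax_S]) (simp_all add: ev)
  also have "\<dots> = dtr S"
    by (rule nfeq) (simp_all add: ev)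
  finally show ?thesis unfolding deq_def by (simp add: ev)
qed

lemma Wlem: "deq ((p \<oplus> (S \<diamond> m)) \<diamond> (I \<oplus> cc \<oplus> I) \<diamond> (d \<oplus> d)) (S \<diamond> m)"
proof -
  have "dtr ((p \<oplus> (S \<diamond> m)) \<diamond> (I \<oplus> cc \<oplus> I) \<diamond> (d \<oplus> d)) = dtr ((e \<oplus> S) \<diamond> (I0 \<oplus> (d \<diamond> m) \<oplus> I0) \<diamond> I2)"
    by (rule stepr[OF deq_sym[OF dm]]) (simp_all add: ev)
  also have "\<dots> = dtr (S \<diamond> (I0 \<oplus> I \<oplus> I0) \<diamond> m)"
    by (rule stepr[OF d_counitL]) (simp_all add: ev)
  also have "\<dots> = dtr (S \<diamond> m)"
    by (rule nfeq) (simp_all add: ev)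
  finally show ?thesis unfolding deq_def by (simp add: ev)
qed

lemma Omega: "deq ((S \<oplus> p) \<diamond> (d \<oplus> I)) (m \<diamond> (I \<oplus> (S \<diamond> m)) \<diamond> (cc \<oplus> I) \<diamond> (I \<oplus> d))"
proof -
  have "dtr ((S \<oplus> p) \<diamond> (d \<oplus> I)) = dtr ((I \<oplus> p) \<diamond> (I0 \<oplus> (m \<diamond> (S \<oplus> PLg) \<diamond> d) \<oplus> I2) \<diamond> (d \<oplus> I))"
    by (rule stepr[OF deq_sym[OF S_PL]]) (simp_all add: ev)
  also have "\<dots> = dtr (((m \<diamond> (S \<oplus> PLg)) \<oplus> p) \<diamond> (I0 \<oplus> ((I \<oplus> d) \<diamond> d) \<oplus> I) \<diamond> I2)"
    by (rule stepr[OF d_coassoc]) (simp_all add: ev)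
  also have "\<dots> = dtr ((m \<diamond> (S \<oplus> I)) \<diamond> (I \<oplus> (PLg \<diamond> m) \<oplus> I0) \<diamond> (d \<oplus> I))"
    by (rule stepr[OF deq_sym[OF b3]]) (simp_all add: ev)
  also have "\<dots> = dtr ((m \<diamond> (S \<oplus> I)) \<diamond> (I \<oplus> (m \<diamond> (I \<oplus> S) \<diamond> d) \<oplus> I0) \<diamond> (I \<oplus> m) \<diamond> (d \<oplus> I))"
    by (rule stepr[OF deq_sym[OF ax_PL]]) (simp_all add: ev)
  also have "\<dots> = dtr (((m \<diamond> (S \<oplus> I)) \<diamond> (I \<oplus> (m \<diamond> (I \<oplus> S)))) \<diamond> (I \<oplus> ((m \<oplus> m) \<diamond> ((I \<oplus> cc) \<oplus> I) \<diamond> (d \<oplus> d)) \<oplus> I0) \<diamond> (d \<oplus> I))"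
    by (rule stepr[OF dm]) (simp_all add: ev)
  also have "\<dots> = dtr (I \<diamond> (I0 \<oplus> (m \<diamond> (m \<oplus> I)) \<oplus> I0) \<diamond> (S \<oplus> I \<oplus> S) \<diamond> (I \<oplus> ((m \<oplus> m) \<diamond> ((I \<oplus> cc) \<oplus> I) \<diamond> (d \<oplus> d))) \<diamond> (d \<oplus> I))"
    by (rule stepr[OF deq_sym[OF m_assoc]]) (simp_all add: ev)
  also have "\<dots> = dtr ((m \<diamond> (I \<oplus> S)) \<diamond> (I0 \<oplus> (m \<diamond> (m \<oplus> I)) \<oplus> I) \<diamond> (S \<oplus> I2 \<oplus> m) \<diamond> (I \<oplus> ((I \<oplus> cc \<oplus> I) \<diamond> (d \<oplus> d))) \<diamond> (d \<oplus> I))"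
    by (rule stepr[OF deq_sym[OF m_assoc]]) (simp_all add: ev)
  also have "\<dots> = dtr ((m \<diamond> (I \<oplus> S) \<diamond> (m \<oplus> I) \<diamond> (m \<oplus> I2) \<diamond> (S \<oplus> I3) \<diamond> (I3 \<oplus> m) \<diamond> (I2 \<oplus> cc \<oplus> I) \<diamond> (I3 \<oplus> d)) \<diamond> (I0 \<oplus> ((d \<oplus> I) \<diamond> d) \<oplus> I) \<diamond> I2)"
    by (rule stepr[OF deq_sym[OF d_coassoc]]) (simp_all add: ev)
  also have "\<dots> = dtr ((m \<diamond> (I \<oplus> S) \<diamond> (m \<oplus> I) \<diamond> (I2 \<oplus> m) \<diamond> (I \<oplus> cc \<oplus> I) \<diamond> (I2 \<oplus> d)) \<diamond> (I0 \<oplus> PRg \<oplus> I2) \<diamond> (d \<oplus> I))"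
    by (rule stepr[OF ax_PR]) (simp_all add: ev)
  also have "\<dots> = dtr ((m \<diamond> (I \<oplus> S)) \<diamond> (I0 \<oplus> ((I \<oplus> p) \<diamond> (cc \<oplus> I) \<diamond> (I \<oplus> d)) \<oplus> I) \<diamond> (I2 \<oplus> m) \<diamond> (I \<oplus> cc \<oplus> I) \<diamond> (I2 \<oplus> d) \<diamond> (d \<oplus> I))"
    by (rule stepr[OF b4]) (simp_all add: ev)
  also have "\<dots> = dtr ((m \<diamond> (I \<oplus> S) \<diamond> (I \<oplus> p \<oplus> I) \<diamond> (cc \<oplus> I2) \<diamond> (I3 \<oplus> m)) \<diamond> (I \<oplus> ((I \<oplus> cc) \<diamond> (cc \<oplus> I) \<diamond> (I \<oplus> d)) \<oplus> I) \<diamond> (I2 \<oplus> d) \<diamond> (d \<oplus> I))"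
    by (rule stepr[OF nat_d_L]) (simp_all add: ev)
  also have "\<dots> = dtr ((m \<diamond> (I \<oplus> S) \<diamond> (I \<oplus> p \<oplus> I) \<diamond> (cc \<oplus> I2) \<diamond> (I3 \<oplus> m) \<diamond> (I2 \<oplus> cc \<oplus> I) \<diamond> (I \<oplus> cc \<oplus> I2)) \<diamond> (I2 \<oplus> ((I \<oplus> d) \<diamond> d) \<oplus> I0) \<diamond> (d \<oplus> I))"
    by (rule stepr[OF d_coassoc]) (simp_all add: ev)
  also have "\<dots> = dtr ((m \<diamond> (I \<oplus> S) \<diamond> (I \<oplus> p \<oplus> I) \<diamond> (I3 \<oplus> m) \<diamond> (I2 \<oplus> cc \<oplus> I)) \<diamond> (I0 \<oplus> ((I \<oplus> d) \<diamond> cc) \<oplus> I2) \<diamond> (I \<oplus> ((I \<oplus> d) \<diamond> d)))"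
    by (rule stepr[OF deq_sym[OF nat_d_R]]) (simp_all add: ev)
  also have "\<dots> = dtr (m \<diamond> (I \<oplus> (S \<diamond> m) \<oplus> I0) \<diamond> (cc \<oplus> I) \<diamond> (I \<oplus> d))"
    by (rule stepr[OF Wlem]) (simp_all add: ev)
  also have "\<dots> = dtr (m \<diamond> (I \<oplus> (S \<diamond> m)) \<diamond> (cc \<oplus> I) \<diamond> (I \<oplus> d))"
    by (rule nfeq) (simp_all add: ev)
  finally show ?thesis unfolding deq_def by (simp add: ev)
qed

end




locale proj = bsm C + D: wbx C OD \<eta>D \<mu>D \<epsilon>D \<delta>D + B: wha C OB \<eta>B \<mu>B \<epsilon>B \<delta>B lamB
  for C :: "('o,'m) bmcat" and OD \<eta>D \<mu>D \<epsilon>D \<delta>D OB \<eta>B \<mu>B \<epsilon>B \<delta>B lamB +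
  fixes f g :: 'm
  assumes wp: "weak_projection C OD \<eta>D \<mu>D \<epsilon>D \<delta>D OB \<eta>B \<mu>B \<epsilon>B \<delta>B lamB f g"
begin

abbreviation "F \<equiv> dgen (f, [OB], [OD])"
abbreviation "G \<equiv> dgen (g, [OD], [OB])"
abbreviation "cDB \<equiv> dgen (c OD OB)"
abbreviation "phi \<equiv> D.m \<diamond> (D.I \<oplus> F)"
abbreviation "T \<equiv> phi \<diamond> (D.I \<oplus> (B.S \<diamond> G)) \<diamond> D.d"
abbreviation "beta \<equiv> (D.I \<oplus> (D.e \<diamond> phi)) \<diamond> (D.d \<oplus> B.I)"

lemmas wpd = wp[unfolded weak_projection_def algebra_morphism_def coalgebra_morphism_def]

lemma ok_fg[simp]: "ok (f, [OB], [OD])" "ok (g, [OD], [OB])"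
  using wpd by (auto simp: ok_def hom_iff)

lemma f_u: "deq (F \<diamond> B.u) D.u" and f_m: "deq (F \<diamond> B.m) (D.m \<diamond> (F \<oplus> F))"
  and f_e: "deq (D.e \<diamond> F) B.e" and f_d: "deq (D.d \<diamond> F) ((F \<oplus> F) \<diamond> B.d)"
  and g_e: "deq (B.e \<diamond> G) D.e" and g_d: "deq (B.d \<diamond> G) ((G \<oplus> G) \<diamond> D.d)"
  and gf: "deq (G \<diamond> F) B.I"
  and gphi: "deq (G \<diamond> (D.m \<diamond> (D.I \<oplus> F))) (B.m \<diamond> (G \<oplus> B.I))"
  unfolding deq_def
  by (simp add: D.hom; rule tr_eq; simp only: st_simps c_simps obj_simps(2)[OF D.X_Ob] obj_simps(2)[OF B.X_Ob]
      fst_conv snd_conv append.simps; use wpd in blast)+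


abbreviation "Z0 \<equiv> didn ([]::'o list)"
abbreviation "DI2 \<equiv> didn [OD,OD]"

lemma natF: "deq (D.cc \<diamond> (D.I \<oplus> F)) ((F \<oplus> D.I) \<diamond> cDB)"
  by (rule deq_nf[OF dnat[of D.I F]]) (simp_all add: ev)
lemma natG: "deq ((B.I \<oplus> G) \<diamond> cDB) (B.cc \<diamond> (G \<oplus> B.I))"
  by (rule deq_nf[OF deq_sym[OF dnat[of G B.I]]]) (simp_all add: ev)

lemma d1: "deq (D.e \<diamond> T) D.e"
proof -
  have "dtr (D.e \<diamond> T) = dtr (Z0 \<diamond> (Z0 \<oplus> (B.e \<diamond> G) \<oplus> Z0) \<diamond> T)"
    by (rule stepr[OF deq_sym[OF g_e]]) (simp_all add: ev)
  also have "\<dots> = dtr (B.e \<diamond> (Z0 \<oplus> (B.m \<diamond> (G \<oplus> B.I)) \<oplus> Z0) \<diamond> (D.I \<oplus> (B.S \<diamond> G)) \<diamond> D.d)"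
    by (rule stepr[OF gphi]) (simp_all add: ev)
  also have "\<dots> = dtr ((B.e \<diamond> B.m \<diamond> (B.I \<oplus> B.S)) \<diamond> (Z0 \<oplus> (B.d \<diamond> G) \<oplus> Z0) \<diamond> D.I)"
    by (rule stepr[OF deq_sym[OF g_d]]) (simp_all add: ev)
  also have "\<dots> = dtr (B.e \<diamond> (Z0 \<oplus> B.PLg \<oplus> Z0) \<diamond> G)"
    by (rule stepr[OF B.ax_PL]) (simp_all add: ev)
  also have "\<dots> = dtr (Z0 \<diamond> (Z0 \<oplus> B.e \<oplus> Z0) \<diamond> G)"
    by (rule stepr[OF B.b2]) (simp_all add: ev)
  also have "\<dots> = dtr (Z0 \<diamond> (Z0 \<oplus> D.e \<oplus> Z0) \<diamond> D.I)"
    by (rule stepr[OF g_e]) (simp_all add: ev)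
  also have "\<dots> = dtr D.e"
    by (rule nfeq) (simp_all add: ev)
  finally show ?thesis unfolding deq_def by (simp add: ev)
qed

lemma d2: "deq (beta \<diamond> (D.I \<oplus> (B.S \<diamond> G)) \<diamond> D.d) D.I"
proof -
  have "dtr (beta \<diamond> (D.I \<oplus> (B.S \<diamond> G)) \<diamond> D.d) = dtr (((D.I \<oplus> (D.e \<diamond> phi)) \<diamond> (DI2 \<oplus> (B.S \<diamond> G))) \<diamond> (Z0 \<oplus> ((D.I \<oplus> D.d) \<diamond> D.d) \<oplus> Z0) \<diamond> D.I)"
    by (rule stepr[OF D.d_coassoc]) (simp_all add: ev)
  also have "\<dots> = dtr (D.I \<diamond> (D.I \<oplus> D.e \<oplus> Z0) \<diamond> D.d)"
    by (rule stepr[OF d1]) (simp_all add: ev)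
  also have "\<dots> = dtr (D.I \<diamond> (Z0 \<oplus> D.I \<oplus> Z0) \<diamond> D.I)"
    by (rule stepr[OF D.d_counitR]) (simp_all add: ev)
  also have "\<dots> = dtr D.I"
    by (rule nfeq) (simp_all add: ev)
  finally show ?thesis unfolding deq_def by (simp add: ev)
qed

abbreviation "Om \<equiv> B.m \<diamond> (B.I \<oplus> (B.S \<diamond> B.m)) \<diamond> (B.cc \<oplus> B.I) \<diamond> (B.I \<oplus> B.d)"
abbreviation "Om' \<equiv> (B.S \<oplus> B.p) \<diamond> (B.d \<oplus> B.I)"

lemma d3: "deq (T \<diamond> phi) (phi \<diamond> (D.I \<oplus> Om) \<diamond> (D.I \<oplus> G \<oplus> B.I) \<diamond> (D.d \<oplus> B.I))"
proof -
  have "dtr (T \<diamond> phi) = dtr ((D.m \<diamond> (D.I \<oplus> F) \<diamond> (D.I \<oplus> (B.S \<diamond> G))) \<diamond> (Z0 \<oplus> ((D.m \<oplus> D.m) \<diamond> ((D.I \<oplus> D.cc) \<oplus> D.I) \<diamond> (D.d \<oplus> D.d)) \<oplus> Z0) \<diamond> (D.I \<oplus> F))"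
    by (rule stepr[OF D.dm]) (simp_all add: ev)
  also have "\<dots> = dtr ((D.m \<diamond> (D.I \<oplus> F) \<diamond> (D.I \<oplus> (B.S \<diamond> G)) \<diamond> (D.m \<oplus> D.m) \<diamond> ((D.I \<oplus> D.cc) \<oplus> D.I) \<diamond> (D.d \<oplus> DI2)) \<diamond>
      (D.I \<oplus> ((F \<oplus> F) \<diamond> B.d) \<oplus> Z0) \<diamond> (D.I \<oplus> B.I))"
    by (rule stepr[OF f_d]) (simp_all add: ev)
  also have "\<dots> = dtr ((D.m \<diamond> (D.I \<oplus> F) \<diamond> (D.I \<oplus> (B.S \<diamond> G)) \<diamond> (D.m \<oplus> D.m)) \<diamond>
      (D.I \<oplus> ((F \<oplus> D.I) \<diamond> cDB) \<oplus> D.I) \<diamond> (D.d \<oplus> B.I \<oplus> F) \<diamond> (D.I \<oplus> B.d))"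
    by (rule stepr[OF natF]) (simp_all add: ev)
  also have "\<dots> = dtr ((D.m \<diamond> (D.I \<oplus> F) \<diamond> (D.I \<oplus> B.S) \<diamond> (D.m \<oplus> B.I)) \<diamond>
      (DI2 \<oplus> (B.m \<diamond> (G \<oplus> B.I)) \<oplus> Z0) \<diamond> (D.I \<oplus> ((F \<oplus> D.I) \<diamond> cDB) \<oplus> B.I) \<diamond> (D.d \<oplus> B.I \<oplus> B.I) \<diamond> (D.I \<oplus> B.d))"
    by (rule stepr[OF gphi]) (simp_all add: ev)
  also have "\<dots> = dtr (D.I \<diamond> (Z0 \<oplus> (D.m \<diamond> (D.I \<oplus> D.m)) \<oplus> Z0) \<diamond> (DI2 \<oplus> (F \<diamond> B.S \<diamond> B.m \<diamond> (G \<oplus> B.I))) \<diamond>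
      (D.I \<oplus> ((F \<oplus> D.I) \<diamond> cDB) \<oplus> B.I) \<diamond> (D.d \<oplus> B.I \<oplus> B.I) \<diamond> (D.I \<oplus> B.d))"
    by (rule stepr[OF D.m_assoc]) (simp_all add: ev)
  also have "\<dots> = dtr (D.m \<diamond> (D.I \<oplus> (F \<diamond> B.m) \<oplus> Z0) \<diamond> (D.I \<oplus> B.I \<oplus> (B.S \<diamond> B.m \<diamond> (G \<oplus> B.I))) \<diamond>
      (D.I \<oplus> cDB \<oplus> B.I) \<diamond> (D.d \<oplus> B.I \<oplus> B.I) \<diamond> (D.I \<oplus> B.d))"
    by (rule stepr[OF deq_sym[OF f_m]]) (simp_all add: ev)
  also have "\<dots> = dtr ((D.m \<diamond> (D.I \<oplus> F) \<diamond> (D.I \<oplus> B.m) \<diamond> (D.I \<oplus> B.I \<oplus> B.S) \<diamond> (D.I \<oplus> B.I \<oplus> B.m)) \<diamond>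
      (D.I \<oplus> (B.cc \<diamond> (G \<oplus> B.I)) \<oplus> B.I) \<diamond> (D.d \<oplus> B.I \<oplus> B.I) \<diamond> (D.I \<oplus> B.d))"
    by (rule stepr[OF natG]) (simp_all add: ev)
  also have "\<dots> = dtr (phi \<diamond> (D.I \<oplus> Om) \<diamond> (D.I \<oplus> G \<oplus> B.I) \<diamond> (D.d \<oplus> B.I))"
    by (rule nfeq) (simp_all add: ev)
  finally show ?thesis unfolding deq_def by (simp add: ev)
qed

lemma d4: "deq (T \<diamond> beta) (phi \<diamond> (D.I \<oplus> Om') \<diamond> (D.I \<oplus> G \<oplus> B.I) \<diamond> (D.d \<oplus> B.I))"
proof -
  have "dtr (T \<diamond> beta) = dtr (T \<diamond> (D.I \<oplus> (B.e \<diamond> G) \<oplus> Z0) \<diamond> (D.I \<oplus> phi) \<diamond> (D.d \<oplus> B.I))"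
    by (rule stepr[OF deq_sym[OF g_e]]) (simp_all add: ev)
  also have "\<dots> = dtr ((T \<diamond> (D.I \<oplus> B.e)) \<diamond> (D.I \<oplus> (B.m \<diamond> (G \<oplus> B.I)) \<oplus> Z0) \<diamond> (D.d \<oplus> B.I))"
    by (rule stepr[OF gphi]) (simp_all add: ev)
  also have "\<dots> = dtr ((D.m \<diamond> (D.I \<oplus> F) \<diamond> (D.I \<oplus> B.S) \<diamond> (D.I \<oplus> B.I \<oplus> B.e) \<diamond> (D.I \<oplus> B.I \<oplus> B.m) \<diamond> (D.I \<oplus> G \<oplus> G \<oplus> B.I)) \<diamond>
      (Z0 \<oplus> ((D.I \<oplus> D.d) \<diamond> D.d) \<oplus> B.I) \<diamond> (D.I \<oplus> B.I))"
    by (rule stepr[OF D.d_coassoc]) (simp_all add: ev)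
  also have "\<dots> = dtr ((D.m \<diamond> (D.I \<oplus> F) \<diamond> (D.I \<oplus> B.S) \<diamond> (D.I \<oplus> B.I \<oplus> B.e) \<diamond> (D.I \<oplus> B.I \<oplus> B.m)) \<diamond>
      (D.I \<oplus> (B.d \<diamond> G) \<oplus> B.I) \<diamond> (D.d \<oplus> B.I))"
    by (rule stepr[OF deq_sym[OF g_d]]) (simp_all add: ev)
  also have "\<dots> = dtr (phi \<diamond> (D.I \<oplus> Om') \<diamond> (D.I \<oplus> G \<oplus> B.I) \<diamond> (D.d \<oplus> B.I))"
    by (rule nfeq) (simp_all add: ev)
  finally show ?thesis unfolding deq_def by (simp add: ev)
qed

lemma key: "deq (T \<diamond> phi) (T \<diamond> beta)"
proof -
  have "dtr (T \<diamond> phi) = dtr (phi \<diamond> (D.I \<oplus> Om) \<diamond> (D.I \<oplus> G \<oplus> B.I) \<diamond> (D.d \<oplus> B.I))"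
    using d3 by (simp add: deq_def)
  also have "\<dots> = dtr (phi \<diamond> (D.I \<oplus> Om' \<oplus> Z0) \<diamond> (D.I \<oplus> G \<oplus> B.I) \<diamond> (D.d \<oplus> B.I))"
    by (rule stepr[OF deq_sym[OF B.Omega]]) (simp_all add: ev)
  also have "\<dots> = dtr (phi \<diamond> (D.I \<oplus> Om') \<diamond> (D.I \<oplus> G \<oplus> B.I) \<diamond> (D.d \<oplus> B.I))"
    by (rule nfeq) (simp_all add: ev)
  also have "\<dots> = dtr (T \<diamond> beta)"
    using d4 by (simp add: deq_def)
  finally show ?thesis unfolding deq_def by (simp add: ev)
qed

lemma idem: "deq (T \<diamond> T) T"
proof -
  have "dtr (T \<diamond> T) = dtr (D.I \<diamond> (Z0 \<oplus> (T \<diamond> beta) \<oplus> Z0) \<diamond> (D.I \<oplus> (B.S \<diamond> G)) \<diamond> D.d)"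
    by (rule stepr[OF key]) (simp_all add: ev)
  also have "\<dots> = dtr (T \<diamond> (Z0 \<oplus> D.I \<oplus> Z0) \<diamond> D.I)"
    by (rule stepr[OF d2]) (simp_all add: ev)
  also have "\<dots> = dtr T"
    by (rule nfeq) (simp_all add: ev)
  finally show ?thesis unfolding deq_def by (simp add: ev)
qed


abbreviation "Kd \<equiv> (D.I \<oplus> (B.S \<diamond> G)) \<diamond> D.d"

lemma sh:
  shows "dtr T = (tBD C OD \<mu>D \<delta>D lamB f g, [OD], [OD])" "wf T"
    and "dtr phi = (phiD C OD \<mu>D f, [OD,OB], [OD])" "wf phi"
    and "dtr beta = (betaD C OD OB \<mu>D \<epsilon>D \<delta>D f, [OD,OB], [OD])" "wf beta"
    and "dtr Kd = (cComp C (cTm C (cId C OD) (cComp C lamB g)) \<delta>D, [OD], [OD,OB])" "wf Kd"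
  by (simp_all add: D.hom, (rule tr_eq, simp_all add: tBD_def phiD_def betaD_def)+)

lemma main:
  "cComp C (tBD C OD \<mu>D \<delta>D lamB f g) (tBD C OD \<mu>D \<delta>D lamB f g) = tBD C OD \<mu>D \<delta>D lamB f g
     \<and> (\<forall>DB p i. DB \<in> cObj C \<and> p \<in> hom C OD DB \<and> i \<in> hom C DB OD \<and>
          cComp C i p = tBD C OD \<mu>D \<delta>D lamB f g \<and> cComp C p i = cId C DB \<longrightarrow>
          is_coequalizer C (cTo C OD OB) OD DB (phiD C OD \<mu>D f) (betaD C OD OB \<mu>D \<epsilon>D \<delta>D f) p)"
proof -
  define tt where "tt = tBD C OD \<mu>D \<delta>D lamB f g"
  define ph where "ph = phiD C OD \<mu>D f"
  define be where "be = betaD C OD OB \<mu>D \<epsilon>D \<delta>D f"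
  define k where "k = cComp C (cTm C (cId C OD) (cComp C lamB g)) \<delta>D"
  note s = sh[folded tt_def ph_def be_def k_def]
  have ty: "arr tt" "dom tt = OD" "cod tt = OD" "arr ph" "dom ph = OD \<odot> OB" "cod ph = OD"
     "arr be" "dom be = OD \<odot> OB" "cod be = OD" "arr k" "dom k = OD" "cod k = OD \<odot> OB"
    using dtr_ok[OF s(2)] dtr_ok[OF s(4)] dtr_ok[OF s(6)] dtr_ok[OF s(8)] s(1,3,5,7)
    by (simp_all add: ok_def obj_Cons dst_simps)
  have F1: "tt \<bullet> tt = tt"
    using idem s(1,2) unfolding deq_def by (simp add: dtr_cmp dst_simps cmp_def)
  have F2: "tt \<bullet> ph = tt \<bullet> be"
    using key s(1-6) unfolding deq_def by (simp add: dtr_cmp dst_simps cmp_def)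
  have F3: "be \<bullet> k = Id OD"
    using d2 s(5-8) unfolding deq_def by (simp add: dtr_cmp dst_simps dtr_didn cmp_def idn_def)
  have F4: "tt = ph \<bullet> k"
    using s(1-4,7,8) dtr_cmp[of Kd phi] by (simp add: dst_simps cmp_def)
  have OB: "OD \<in> Ob" "OB \<in> Ob" by simp_all
  show ?thesis unfolding tt_def[symmetric] ph_def[symmetric] be_def[symmetric]
  proof (intro conjI allI impI)
    show "tt \<bullet> tt = tt" by (rule F1)
    fix DB pp ii
    assume a: "DB \<in> Ob \<and> pp \<in> hom C OD DB \<and> ii \<in> hom C DB OD \<and> ii \<bullet> pp = tt \<and> pp \<bullet> ii = Id DB"
    have pt: "arr pp" "dom pp = OD" "cod pp = DB" "arr ii" "dom ii = DB" "cod ii = OD"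
      using a by (auto simp: hom_iff)
    have ptt: "pp \<bullet> tt = pp"
    proof -
      have "pp \<bullet> tt = pp \<bullet> (ii \<bullet> pp)" using a by simp
      also have "\<dots> = (pp \<bullet> ii) \<bullet> pp" using pt by simp
      also have "\<dots> = pp" using a pt by simp
      finally show ?thesis .
    qed
    have eq: "pp \<bullet> ph = pp \<bullet> be"
    proof -
      have "pp \<bullet> ph = (pp \<bullet> tt) \<bullet> ph" using ptt by simp
      also have "\<dots> = pp \<bullet> (tt \<bullet> ph)" using pt ty by simp
      also have "\<dots> = pp \<bullet> (tt \<bullet> be)" using F2 by simp
      also have "\<dots> = (pp \<bullet> tt) \<bullet> be" using pt ty by simp
      finally show ?thesis using ptt by simp
    qed
    show "is_coequalizer C (OD \<odot> OB) OD DB ph be pp"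
      unfolding is_coequalizer_def
    proof (intro conjI ballI impI)
      show "ph \<in> hom C (OD \<odot> OB) OD" "be \<in> hom C (OD \<odot> OB) OD" "pp \<in> hom C OD DB"
        using ty pt by (simp_all add: hom_iff)
      show "pp \<bullet> ph = pp \<bullet> be" by (rule eq)
      fix Q h
      assume Q: "Q \<in> Ob" and h: "h \<in> hom C OD Q" and hq: "h \<bullet> ph = h \<bullet> be"
      have ht: "arr h" "dom h = OD" "cod h = Q" using h by (auto simp: hom_iff)
      have w1: "(h \<bullet> ii) \<bullet> pp = h"
      proof -
        have "(h \<bullet> ii) \<bullet> pp = h \<bullet> (ii \<bullet> pp)" using ht pt by simp
        also have "\<dots> = h \<bullet> tt" using a by simp
        also have "\<dots> = h \<bullet> (ph \<bullet> k)" using F4 by simp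
        also have "\<dots> = (h \<bullet> ph) \<bullet> k" using ht ty by simp
        also have "\<dots> = (h \<bullet> be) \<bullet> k" using hq by simp
        also have "\<dots> = h \<bullet> (be \<bullet> k)" using ht ty by simp
        also have "\<dots> = h" using F3 ht by simp
        finally show ?thesis .
      qed
      show "\<exists>!w. w \<in> hom C DB Q \<and> w \<bullet> pp = h"
      proof (rule ex1I[of _ "h \<bullet> ii"])
        show "h \<bullet> ii \<in> hom C DB Q \<and> (h \<bullet> ii) \<bullet> pp = h" using ht pt w1 by (simp add: hom_iff)
        fix w assume w: "w \<in> hom C DB Q \<and> w \<bullet> pp = h"
        have wt: "arr w" "dom w = DB" "cod w = Q" using w by (auto simp: hom_iff)
        have "w = w \<bullet> Id DB" using wt by simp
        also have "\<dots> = w \<bullet> (pp \<bullet> ii)" using a by simp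
        also have "\<dots> = (w \<bullet> pp) \<bullet> ii" using wt pt by simp
        also have "\<dots> = h \<bullet> ii" using w by simp
        finally show "w = h \<bullet> ii" .
      qed
    qed
  qed
qed

end

theorem proposition3p4:
  fixes C :: "('o,'m) bmcat"
    and D B :: 'o
    and \<eta>D \<mu>D \<epsilon>D \<delta>D \<eta>B \<mu>B \<epsilon>B \<delta>B lamB f g :: 'm
  assumes "braided_strict_monoidal C"
    and "weak_projection C D \<eta>D \<mu>D \<epsilon>D \<delta>D B \<eta>B \<mu>B \<epsilon>B \<delta>B lamB f g"
  shows "cComp C (tBD C D \<mu>D \<delta>D lamB f g) (tBD C D \<mu>D \<delta>D lamB f g) = tBD C D \<mu>D \<delta>D lamB f g
     \<and> (\<forall>DB p i. DB \<in> cObj C \<and> p \<in> hom C D DB \<and> i \<in> hom C DB D \<and>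
          cComp C i p = tBD C D \<mu>D \<delta>D lamB f g \<and> cComp C p i = cId C DB \<longrightarrow>
          is_coequalizer C (cTo C D B) D DB (phiD C D \<mu>D f) (betaD C D B \<mu>D \<epsilon>D \<delta>D f) p)"
proof -
  have wbD: "weak_bialgebra C D \<eta>D \<mu>D \<epsilon>D \<delta>D" and whB: "weak_hopf_algebra C B \<eta>B \<mu>B \<epsilon>B \<delta>B lamB"
    using assms(2) by (simp_all add: weak_projection_def)
  have wbB: "weak_bialgebra C B \<eta>B \<mu>B \<epsilon>B \<delta>B" using whB by (simp add: weak_hopf_algebra_def)
  interpret proj C D \<eta>D \<mu>D \<epsilon>D \<delta>D B \<eta>B \<mu>B \<epsilon>B \<delta>B lamB f g
    using assms(1,2) wbD whB wbB by unfold_locales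
  show ?thesis using main .
qed

end
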